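(* Let $n\geq2$, fix $p_0\in\mathbb{S}^n$ and let $\Psi:\mathbb{B}\to B$ be a patch of normal geodesic coordinates centered at $p_0$, where $\mathbb{B}$ is the unit geodesic ball in $\mathbb{S}^n$ centered at $p_0$ and $B$ the unit ball in $\mathbb{R}^n$. Let $r$ be a positive integer and let \[\varphi(x)=\sum_{j=1}^{N'}\frac{c_j}{|x-x_j|^{\frac n2-1}}J_{\frac n2-1}(|x-x_j|)\] with finitely many vectors $c_j\in\mathbb{R}^m$ and points $x_j\in\mathbb{R}^n$. Given any $\delta>0$, for every sufficiently large positive integer $N$ there is an $\mathbb{R}^m$-valued eigenfunction $\psi$ of the Laplacian on $\mathbb{S}^n$ with eigenvalue $N(N+n-1)$ such that \[\Big\|\varphi-\psi\circ\Psi^{-1}\Big(\frac{\cdot}{N}\Big)\Big\|_{C^r(B)}<\delta.\]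
   Context: $\mathbb{S}^n$ is the unit sphere in $\mathbb{R}^{n+1}$ with the round metric. $J_\nu$ is the Bessel function of the first kind of order $\nu$; $t^{-\nu}J_\nu(t)$ is extended smoothly to $t=0$. *)

theory Defs
  imports "HOL-Analysis.Analysis"
begin

definition pderiv_axis :: "'n::finite \<Rightarrow> (real^'n \<Rightarrow> 'b::real_normed_vector) \<Rightarrow> real^'n \<Rightarrow> 'b" where
  "pderiv_axis i f x = vector_derivative (\<lambda>t. f (x + t *\<^sub>R axis i 1)) (at 0)"

fun pderivs :: "'n::finite list \<Rightarrow> (real^'n \<Rightarrow> 'b::real_normed_vector) \<Rightarrow> real^'n \<Rightarrow> 'b" where
  "pderivs [] f = f"
| "pderivs (i # is) f = pderiv_axis i (pderivs is f)"

definition smooth_on_open :: "(real^'n::finite) set \<Rightarrow> (real^'n \<Rightarrow> 'b::real_normed_vector) \<Rightarrow> bool" where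
  "smooth_on_open S f \<longleftrightarrow> open S \<and>
     (\<forall>is. continuous_on S (pderivs is f) \<and>
        (\<forall>i. \<forall>x\<in>S. (\<lambda>t. pderivs is f (x + t *\<^sub>R axis i 1)) differentiable (at 0)))"

definition Cr_values :: "nat \<Rightarrow> (real^'n::finite) set \<Rightarrow> (real^'n \<Rightarrow> 'b::real_normed_vector) \<Rightarrow> real set" where
  "Cr_values r S g = {norm (pderivs is g x) | is x. length is \<le> r \<and> x \<in> S}"

definition Cr_norm :: "nat \<Rightarrow> (real^'n::finite) set \<Rightarrow> (real^'n \<Rightarrow> 'b::real_normed_vector) \<Rightarrow> real" where
  "Cr_norm r S g = Sup (Cr_values r S g)"

text \<open>Bessel function of the first kind of order nu, for t \<ge> 0.\<close>
definition besselJ :: "real \<Rightarrow> real \<Rightarrow> real" where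
  "besselJ \<nu> t = (\<Sum>k. (-1)^k / (fact k * Gamma (real k + \<nu> + 1)) * (t / 2) powr (2 * real k + \<nu>))"

text \<open>t^(-nu) J_nu(t), extended smoothly (by its limit) to t = 0.\<close>
definition besselJ_scaled :: "real \<Rightarrow> real \<Rightarrow> real" where
  "besselJ_scaled \<nu> t = (if t = 0 then 1 / (2 powr \<nu> * Gamma (\<nu> + 1)) else t powr (- \<nu>) * besselJ \<nu> t)"

definition laplacian :: "(real^'k::finite \<Rightarrow> 'b::real_normed_vector) \<Rightarrow> real^'k \<Rightarrow> 'b" where
  "laplacian F x = (\<Sum>i\<in>UNIV. pderivs [i, i] F x)"

text \<open>Laplace-Beltrami eigenfunction on the unit sphere of R^k with eigenvalue lam
  (i.e. -Delta psi = lam psi), defined via the degree-0 homogeneous extension: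
  Delta_S psi = (Delta_{R^k} F)|_{sphere}, where F x = psi (x / |x|).\<close>
definition sphere_eigenfunction :: "(real^'k::finite \<Rightarrow> 'b::real_normed_vector) \<Rightarrow> real \<Rightarrow> bool" where
  "sphere_eigenfunction \<psi> lam \<longleftrightarrow>
     (let F = (\<lambda>x. \<psi> (x /\<^sub>R norm x)) in
       smooth_on_open (- {0}) F \<and>
       (\<forall>x\<in>sphere 0 1. laplacian F x = - lam *\<^sub>R F x) \<and>
       (\<exists>x\<in>sphere 0 1. \<psi> x \<noteq> 0))"

text \<open>Inverse of a normal geodesic coordinate chart centered at p0: the exponential map
  exp_p0 composed with a linear isometry L from R^n onto the tangent space at p0.\<close>
definition geo_chart_inv :: "real^'k::finite \<Rightarrow> (real^'n::finite \<Rightarrow> real^'k) \<Rightarrow> real^'n \<Rightarrow> real^'k" where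
  "geo_chart_inv p0 L y = cos (norm y) *\<^sub>R p0 + (sin (norm y) / norm y) *\<^sub>R L y"

end

theory Submission
  imports Defs
begin

definition smooth_in :: "(real^'n::finite) set \<Rightarrow> (real^'n \<Rightarrow> 'b::real_normed_vector) \<Rightarrow> bool" where
  "smooth_in U f \<longleftrightarrow> (\<forall>is i. \<forall>x\<in>U. (\<lambda>t. pderivs is f (x + t *\<^sub>R axis i 1)) differentiable (at 0))"

lemma open_line_pre:
  fixes x v :: "real^'n::finite"
  assumes "open U" 
  shows "open {t::real. x + t *\<^sub>R v \<in> U}"
proof -
  have "continuous_on UNIV (\<lambda>t::real. x + t *\<^sub>R v)" by (intro continuous_intros)
  from open_vimage[OF assms this] show ?thesis by (simp add: vimage_def)
qed

lemma pderiv_axis_from: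
  fixes h k :: "real^'n::finite \<Rightarrow> 'b::real_normed_vector"
  assumes "open U" "x\<in>U" "\<forall>y\<in>U. h y = k y"
    "((\<lambda>t. k (x + t *\<^sub>R axis i 1)) has_vector_derivative D) (at 0)"
  shows "pderiv_axis i h x = D" "(\<lambda>t. h (x + t *\<^sub>R axis i 1)) differentiable at 0"
proof -
  let ?W = "{t::real. x + t *\<^sub>R axis i 1 \<in> U}"
  have W: "open ?W" "0 \<in> ?W" using open_line_pre[OF assms(1)] assms(2) by auto
  have "((\<lambda>t. h (x + t *\<^sub>R axis i 1)) has_vector_derivative D) (at 0)"
    by (rule has_vector_derivative_transform_within_open[OF assms(4) W]) (use assms(3) in auto)
  then show "pderiv_axis i h x = D" "(\<lambda>t. h (x + t *\<^sub>R axis i 1)) differentiable at 0"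
    unfolding pderiv_axis_def by (auto intro: vector_derivative_at differentiableI_vector)
qed

lemma pderivs_cong:
  assumes "open U" "\<forall>y\<in>U. f y = g y"
  shows "x \<in> U \<Longrightarrow> pderivs is f x = pderivs is g x"
proof (induction "is" arbitrary: x)
  case Nil then show ?case using assms by simp
next
  case (Cons i "is")
  have "(\<lambda>t. pderivs is g (x + t *\<^sub>R axis i 1)) differentiable at 0 \<Longrightarrow> ?case"
    using pderiv_axis_from(1)[OF assms(1) Cons.prems, of "pderivs is f" "pderivs is g"] Cons.IH
    by (simp add: pderiv_axis_def vector_derivative_works)
  moreover have "\<not> (\<lambda>t. pderivs is g (x + t *\<^sub>R axis i 1)) differentiable at 0 \<Longrightarrow> ?case"
  proof -
    assume nd: "\<not> (\<lambda>t. pderivs is g (x + t *\<^sub>R axis i 1)) differentiable at 0"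
    have nd2: "\<not> (\<lambda>t. pderivs is f (x + t *\<^sub>R axis i 1)) differentiable at 0"
      using pderiv_axis_from(2)[OF assms(1) Cons.prems, of "pderivs is g" "pderivs is f"] Cons.IH nd
      by (auto simp: vector_derivative_works)
    show ?case using nd nd2 by (simp add: pderiv_axis_def vector_derivative_def differentiable_def
         has_vector_derivative_def)
  qed
  ultimately show ?case by blast
qed

lemma pderivs_lin:
  fixes f g :: "real^'n::finite \<Rightarrow> 'b::real_normed_vector"
  assumes "open U" "smooth_in U f" "smooth_in U g"
  shows "x \<in> U \<Longrightarrow> pderivs is (\<lambda>y. a *\<^sub>R f y + b *\<^sub>R g y) x = a *\<^sub>R pderivs is f x + b *\<^sub>R pderivs is g x"
proof (induction "is" arbitrary: x)
  case Nil then show ?case by simp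
next
  case (Cons i "is")
  have df: "((\<lambda>t. pderivs is f (x + t *\<^sub>R axis i 1)) has_vector_derivative pderivs (i#is) f x) (at 0)"
    using assms(2) Cons.prems by (simp add: smooth_in_def pderiv_axis_def vector_derivative_works)
  have dg: "((\<lambda>t. pderivs is g (x + t *\<^sub>R axis i 1)) has_vector_derivative pderivs (i#is) g x) (at 0)"
    using assms(3) Cons.prems by (simp add: smooth_in_def pderiv_axis_def vector_derivative_works)
  have "((\<lambda>t. a *\<^sub>R pderivs is f (x + t *\<^sub>R axis i 1) + b *\<^sub>R pderivs is g (x + t *\<^sub>R axis i 1))
      has_vector_derivative a *\<^sub>R pderivs (i#is) f x + b *\<^sub>R pderivs (i#is) g x) (at 0)"
    by (intro has_vector_derivative_add bounded_linear.has_vector_derivative[OF bounded_linear_scaleR_right] df dg)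
  from pderiv_axis_from(1)[OF assms(1) Cons.prems _ this, of "pderivs is (\<lambda>y. a *\<^sub>R f y + b *\<^sub>R g y)"]
  show ?case using Cons.IH by simp
qed

lemma smooth_in_lin:
  fixes f g :: "real^'n::finite \<Rightarrow> 'b::real_normed_vector"
  assumes "open U" "smooth_in U f" "smooth_in U g"
  shows "smooth_in U (\<lambda>y. a *\<^sub>R f y + b *\<^sub>R g y)"
  unfolding smooth_in_def
proof (intro allI ballI)
  fix "is" i x assume x: "x \<in> U"
  have df: "((\<lambda>t. pderivs is f (x + t *\<^sub>R axis i 1)) has_vector_derivative pderivs (i#is) f x) (at 0)"
    using assms(2) x by (simp add: smooth_in_def pderiv_axis_def vector_derivative_works)
  have dg: "((\<lambda>t. pderivs is g (x + t *\<^sub>R axis i 1)) has_vector_derivative pderivs (i#is) g x) (at 0)"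
    using assms(3) x by (simp add: smooth_in_def pderiv_axis_def vector_derivative_works)
  have "((\<lambda>t. a *\<^sub>R pderivs is f (x + t *\<^sub>R axis i 1) + b *\<^sub>R pderivs is g (x + t *\<^sub>R axis i 1))
      has_vector_derivative a *\<^sub>R pderivs (i#is) f x + b *\<^sub>R pderivs (i#is) g x) (at 0)"
    by (intro has_vector_derivative_add bounded_linear.has_vector_derivative[OF bounded_linear_scaleR_right] df dg)
  from pderiv_axis_from(2)[OF assms(1) x _ this, of "pderivs is (\<lambda>y. a *\<^sub>R f y + b *\<^sub>R g y)"]
  show "(\<lambda>t. pderivs is (\<lambda>y. a *\<^sub>R f y + b *\<^sub>R g y) (x + t *\<^sub>R axis i 1)) differentiable at 0"
    using pderivs_lin[OF assms] by simp
qed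

lemma pderivs_scale_vec:
  fixes h :: "real^'n::finite \<Rightarrow> real" and c :: "'b::real_normed_vector"
  assumes "open U" "smooth_in U h"
  shows "x \<in> U \<Longrightarrow> pderivs is (\<lambda>y. h y *\<^sub>R c) x = pderivs is h x *\<^sub>R c"
proof (induction "is" arbitrary: x)
  case Nil then show ?case by simp
next
  case (Cons i "is")
  have df: "((\<lambda>t. pderivs is h (x + t *\<^sub>R axis i 1)) has_vector_derivative pderivs (i#is) h x) (at 0)"
    using assms(2) Cons.prems by (simp add: smooth_in_def pderiv_axis_def vector_derivative_works)
  have "((\<lambda>t. pderivs is h (x + t *\<^sub>R axis i 1) *\<^sub>R c)
      has_vector_derivative pderivs (i#is) h x *\<^sub>R c) (at 0)"
    by (rule bounded_linear.has_vector_derivative[OF bounded_linear_scaleR_left df])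
  from pderiv_axis_from(1)[OF assms(1) Cons.prems _ this, of "pderivs is (\<lambda>y. h y *\<^sub>R c)"]
  show ?case using Cons.IH by simp
qed

lemma smooth_in_scale_vec:
  fixes h :: "real^'n::finite \<Rightarrow> real" and c :: "'b::real_normed_vector"
  assumes "open U" "smooth_in U h"
  shows "smooth_in U (\<lambda>y. h y *\<^sub>R c)"
  unfolding smooth_in_def
proof (intro allI ballI)
  fix "is" i x assume x: "x \<in> U"
  have df: "((\<lambda>t. pderivs is h (x + t *\<^sub>R axis i 1)) has_vector_derivative pderivs (i#is) h x) (at 0)"
    using assms(2) x by (simp add: smooth_in_def pderiv_axis_def vector_derivative_works)
  have "((\<lambda>t. pderivs is h (x + t *\<^sub>R axis i 1) *\<^sub>R c)
      has_vector_derivative pderivs (i#is) h x *\<^sub>R c) (at 0)"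
    by (rule bounded_linear.has_vector_derivative[OF bounded_linear_scaleR_left df])
  from pderiv_axis_from(2)[OF assms(1) x _ this, of "pderivs is (\<lambda>y. h y *\<^sub>R c)"]
  show "(\<lambda>t. pderivs is (\<lambda>y. h y *\<^sub>R c) (x + t *\<^sub>R axis i 1)) differentiable at 0"
    using pderivs_scale_vec[OF assms] by metis
qed

lemma pderivs_sum:
  fixes f :: "'j \<Rightarrow> real^'n::finite \<Rightarrow> 'b::real_normed_vector"
  assumes "open U" "finite J" "\<And>j. j \<in> J \<Longrightarrow> smooth_in U (f j)"
  shows "smooth_in U (\<lambda>y. \<Sum>j\<in>J. f j y) \<and> (\<forall>x\<in>U. pderivs is (\<lambda>y. \<Sum>j\<in>J. f j y) x = (\<Sum>j\<in>J. pderivs is (f j) x))"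
  using assms(2,3)
proof (induction J rule: finite_induct)
  case empty
  have z: "(\<lambda>y::real^'n. \<Sum>j\<in>{}. f j y) = (\<lambda>y. 1 *\<^sub>R (\<lambda>y. 0) y + 0 *\<^sub>R (\<lambda>y. 0) y)" by simp
  have s0: "smooth_in U (\<lambda>y::real^'n. 0::'b)" unfolding smooth_in_def
  proof (intro allI ballI)
    fix "is" i x
    have "pderivs is (\<lambda>y::real^'n. 0::'b) = (\<lambda>y. 0)" 
    proof (induction "is")
      case (Cons a "is") then show ?case by (simp add: pderiv_axis_def vector_derivative_at)
    qed simp
    then show "(\<lambda>t. pderivs is (\<lambda>y::real^'n. 0::'b) (x + t *\<^sub>R axis i 1)) differentiable at 0" by simp
  qed
  have "pderivs is (\<lambda>y::real^'n. 0::'b) = (\<lambda>y. 0)" 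
  proof (induction "is")
    case (Cons a "is") then show ?case by (simp add: pderiv_axis_def vector_derivative_at)
  qed simp
  then show ?case using s0 by simp
next
  case (insert a J)
  have e: "(\<lambda>y. \<Sum>j\<in>insert a J. f j y) = (\<lambda>y. 1 *\<^sub>R f a y + 1 *\<^sub>R (\<lambda>y. \<Sum>j\<in>J. f j y) y)"
    using insert by simp
  have s1: "smooth_in U (f a)" using insert by simp
  show ?case unfolding e using insert pderivs_lin[OF assms(1) s1, of "\<lambda>y. \<Sum>j\<in>J. f j y", where a=1 and b=1]
      smooth_in_lin[OF assms(1) s1, of "\<lambda>y. \<Sum>j\<in>J. f j y", where a=1 and b=1]
    by simp
qed

definition pw :: "(nat \<Rightarrow> real) \<Rightarrow> real \<Rightarrow> real" where
  "pw c w = (\<Sum>k. c k * w ^ k)"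

definition Hc :: "((nat \<Rightarrow> nat \<Rightarrow> real) \<times> (nat \<Rightarrow> real)) set" where
  "Hc = {(cN, c). (\<forall>k. (\<lambda>N. cN N k) \<longlonglongrightarrow> c k) \<and>
          (\<exists>D. (\<forall>N k. \<bar>cN N k\<bar> \<le> D k) \<and> (\<forall>R. summable (\<lambda>k. D k * R ^ k)))}"

lemma Hc_D:
  assumes "(cN, c) \<in> Hc"
  obtains D where "\<And>N k. \<bar>cN N k\<bar> \<le> D k" "\<And>k. \<bar>c k\<bar> \<le> D k" "\<And>R. summable (\<lambda>k. D k * R ^ k)"
proof -
  from assms obtain D where D: "\<And>N k. \<bar>cN N k\<bar> \<le> D k" "\<And>R. summable (\<lambda>k. D k * R ^ k)"
    and L: "\<And>k. (\<lambda>N. cN N k) \<longlonglongrightarrow> c k" unfolding Hc_def by auto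
  have "\<bar>c k\<bar> \<le> D k" for k
    by (rule LIMSEQ_le_const2[OF tendsto_rabs[OF L[of k]]]) (use D in auto)
  with D that show ?thesis by blast
qed

lemma summable_dom:
  fixes a D :: "nat \<Rightarrow> real" and w :: real
  assumes "\<And>k. \<bar>a k\<bar> \<le> D k" "\<And>R. summable (\<lambda>k. D k * R ^ k)"
  shows "summable (\<lambda>k. a k * w ^ k)" "summable (\<lambda>k. \<bar>a k * w ^ k\<bar>)"
proof -
  have s: "summable (\<lambda>k. D k * \<bar>w\<bar> ^ k)" using assms(2) .
  have b: "norm (\<bar>a k * w ^ k\<bar>) \<le> D k * \<bar>w\<bar> ^ k" for k
    using assms(1)[of k] by (simp add: abs_mult power_abs mult_right_mono)
  show "summable (\<lambda>k. \<bar>a k * w ^ k\<bar>)"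
    by (rule summable_comparison_test[OF _ s]) (use b in auto)
  then show "summable (\<lambda>k. a k * w ^ k)" by (rule summable_rabs_cancel)
qed

lemma Hc_summable:
  assumes "(cN, c) \<in> Hc"
  shows "summable (\<lambda>k. cN N k * w ^ k)" "summable (\<lambda>k. c k * w ^ k)"
proof -
  obtain D where D: "\<And>N k. \<bar>cN N k\<bar> \<le> D k" "\<And>k. \<bar>c k\<bar> \<le> D k" "\<And>R. summable (\<lambda>k. D k * R ^ k)"
    using Hc_D[OF assms] by blast
  show "summable (\<lambda>k. cN N k * w ^ k)" by (rule summable_dom(1)[OF D(1) D(3)])
  show "summable (\<lambda>k. c k * w ^ k)" by (rule summable_dom(1)[OF D(2) D(3)])
qed

lemma pw_deriv:
  assumes "\<And>w. summable (\<lambda>k. c k * w ^ k)"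
  shows "(pw c has_real_derivative pw (diffs c) w) (at w)"
  unfolding pw_def by (rule termdiffs_strong_converges_everywhere[OF assms])

lemma Hc_diffs:
  assumes "(cN, c) \<in> Hc"
  shows "(\<lambda>N. diffs (cN N), diffs c) \<in> Hc"
proof -
  from assms have L: "\<And>k. (\<lambda>N. cN N k) \<longlonglongrightarrow> c k" unfolding Hc_def by auto
  obtain D where D: "\<And>N k. \<bar>cN N k\<bar> \<le> D k" "\<And>R. summable (\<lambda>k. D k * R ^ k)"
    using assms unfolding Hc_def by auto
  have "\<bar>diffs (cN N) k\<bar> \<le> diffs D k" for N k
  proof -
    have "\<bar>diffs (cN N) k\<bar> = real (Suc k) * \<bar>cN N (Suc k)\<bar>" by (simp add: diffs_def abs_mult)
    also have "\<dots> \<le> real (Suc k) * D (Suc k)" by (rule mult_left_mono[OF D(1)]) simp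
    finally show ?thesis by (simp add: diffs_def)
  qed
  moreover have "summable (\<lambda>k. diffs D k * R ^ k)" for R
    by (rule termdiff_converges_all) (rule D(2))
  moreover have "(\<lambda>N. diffs (cN N) k) \<longlonglongrightarrow> diffs c k" for k
    unfolding diffs_def by (intro tendsto_mult tendsto_const L)
  ultimately show ?thesis unfolding Hc_def by (intro CollectI case_prodI conjI allI exI[of _ "diffs D"]) auto
qed

lemma Hc_unif:
  assumes "(cN, c) \<in> Hc" "\<epsilon> > 0"
  shows "\<forall>\<^sub>F N in sequentially. \<forall>w. \<bar>w\<bar> \<le> M \<longrightarrow> \<bar>pw (cN N) w - pw c w\<bar> < \<epsilon>"
proof -
  from assms have L: "\<And>k. (\<lambda>N. cN N k) \<longlonglongrightarrow> c k" unfolding Hc_def by auto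
  obtain D where D: "\<And>N k. \<bar>cN N k\<bar> \<le> D k" "\<And>k. \<bar>c k\<bar> \<le> D k" "\<And>R. summable (\<lambda>k. D k * R ^ k)"
    using Hc_D[OF assms(1)] by blast
  define M' where "M' = \<bar>M\<bar>"
  have M': "M' \<ge> 0" "\<bar>M\<bar> \<le> M'" by (auto simp: M'_def)
  define e where "e N = (\<Sum>k. \<bar>cN N k - c k\<bar> * M' ^ k)" for N
  have lim0: "((\<lambda>N. \<bar>cN N k - c k\<bar> * M' ^ k) \<longlongrightarrow> 0) sequentially" for k
  proof -
    have "((\<lambda>N. \<bar>cN N k - c k\<bar> * M' ^ k) \<longlongrightarrow> \<bar>c k - c k\<bar> * M' ^ k) sequentially"
      by (intro tendsto_mult tendsto_rabs tendsto_diff tendsto_const L)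
    then show ?thesis by simp
  qed
  have bd: "\<forall>\<^sub>F (k, N) in sequentially \<times>\<^sub>F sequentially. norm (\<bar>cN N k - c k\<bar> * M' ^ k) \<le> 2 * D k * M' ^ k"
  proof (rule always_eventually, rule allI)
    fix kN :: "nat \<times> nat"
    obtain k N where kN: "kN = (k, N)" by (cases kN)
    have "\<bar>cN N k - c k\<bar> \<le> 2 * D k" using D(1)[of N k] D(2)[of k] by linarith
    then have "\<bar>cN N k - c k\<bar> * M' ^ k \<le> 2 * D k * M' ^ k"
      by (rule mult_right_mono) (use M' in simp)
    then show "case kN of (k, N) \<Rightarrow> norm (\<bar>cN N k - c k\<bar> * M' ^ k) \<le> 2 * D k * M' ^ k"
      using M' by (simp add: kN abs_mult)
  qed
  have sm: "summable (\<lambda>k. 2 * D k * M' ^ k)" using summable_mult[OF D(3), of 2] by (simp add: mult.assoc)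
  have "((\<lambda>N. e N) \<longlongrightarrow> (\<Sum>k. (0::real))) sequentially"
    unfolding e_def
    using tannerys_theorem[where a="\<lambda>k N. \<bar>cN N k - c k\<bar> * M' ^ k" and b="\<lambda>k. 0"
        and F=sequentially and M="\<lambda>k. 2 * D k * M' ^ k", OF lim0 bd sm] by simp
  then have "\<forall>\<^sub>F N in sequentially. e N < \<epsilon>" using assms(2) by (simp add: order_tendstoD)
  then show ?thesis
  proof (rule eventually_mono, intro allI impI)
    fix N w assume eN: "e N < \<epsilon>" and w: "\<bar>w\<bar> \<le> M"
    have s1: "summable (\<lambda>k. cN N k * w ^ k)" "summable (\<lambda>k. c k * w ^ k)"
      using Hc_summable[OF assms(1)] by auto
    have d2: "\<bar>cN N k - c k\<bar> \<le> 2 * D k" for k using D(1)[of N k] D(2)[of k] by linarith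
    have s2: "summable (\<lambda>k. \<bar>cN N k - c k\<bar> * M' ^ k)"
    proof (rule summable_comparison_test[OF _ summable_mult[OF D(3), of 2]], intro exI allI impI)
      fix k
      have "\<bar>cN N k - c k\<bar> * M' ^ k \<le> 2 * D k * M' ^ k"
        by (rule mult_right_mono[OF d2]) (use M' in simp)
      then show "norm (\<bar>cN N k - c k\<bar> * M' ^ k) \<le> 2 * (D k * M' ^ k)"
        using M' by (simp add: abs_mult)
    qed
    have bnd: "\<bar>(cN N k - c k) * w ^ k\<bar> \<le> \<bar>cN N k - c k\<bar> * M' ^ k" for k
    proof -
      have "\<bar>w\<bar> ^ k \<le> M' ^ k" by (rule power_mono) (use w M' in auto)
      then have "\<bar>cN N k - c k\<bar> * \<bar>w\<bar> ^ k \<le> \<bar>cN N k - c k\<bar> * M' ^ k"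
        by (rule mult_left_mono) simp
      then show ?thesis by (simp add: abs_mult power_abs)
    qed
    have s3: "summable (\<lambda>k. \<bar>(cN N k - c k) * w ^ k\<bar>)"
      by (rule summable_comparison_test[OF _ s2]) (use bnd in simp)
    have "pw (cN N) w - pw c w = (\<Sum>k. (cN N k - c k) * w ^ k)"
      unfolding pw_def using suminf_diff[OF s1] by (simp add: left_diff_distrib)
    also have "\<bar>\<dots>\<bar> \<le> (\<Sum>k. \<bar>(cN N k - c k) * w ^ k\<bar>)"
      using summable_rabs[OF s3] .
    also have "\<dots> \<le> e N" unfolding e_def
      by (rule suminf_le[OF bnd s3 s2])
    finally show "\<bar>pw (cN N) w - pw c w\<bar> < \<epsilon>" using eN by simp
  qed
qed

inductive_set Aset :: "((nat \<Rightarrow> real^'n::finite \<Rightarrow> real) \<times> (real^'n \<Rightarrow> real)) set" where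
  Aconst: "a \<longlonglongrightarrow> l \<Longrightarrow> (\<lambda>N x. a N, \<lambda>x. l) \<in> Aset"
| Acoord: "(\<lambda>N x. x $ j, \<lambda>x. x $ j) \<in> Aset"
| Aadd: "(F, f) \<in> Aset \<Longrightarrow> (G, g) \<in> Aset \<Longrightarrow> (\<lambda>N x. F N x + G N x, \<lambda>x. f x + g x) \<in> Aset"
| Amult: "(F, f) \<in> Aset \<Longrightarrow> (G, g) \<in> Aset \<Longrightarrow> (\<lambda>N x. F N x * G N x, \<lambda>x. f x * g x) \<in> Aset"
| Acomp: "(F, f) \<in> Aset \<Longrightarrow> (cN, c) \<in> Hc \<Longrightarrow> (\<lambda>N x. pw (cN N) (F N x), \<lambda>x. pw c (f x)) \<in> Aset"

lemma Aconst0: "(\<lambda>N x. l, \<lambda>x. l) \<in> Aset"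
  using Aconst[of "\<lambda>N. l" l] by simp

lemma A_deriv:
  assumes "(F, f) \<in> Aset"
  shows "\<exists>G g. (G, g) \<in> Aset \<and> (\<forall>N x. ((\<lambda>t. F N (x + t *\<^sub>R axis d 1)) has_real_derivative G N x) (at 0)
             \<and> ((\<lambda>t. f (x + t *\<^sub>R axis d 1)) has_real_derivative g x) (at 0))"
  using assms
proof (induction rule: Aset.induct)
  case (Aconst a l)
  show ?case by (rule exI[of _ "\<lambda>N x. 0"], rule exI[of _ "\<lambda>x. 0"]) (auto intro: Aconst0 derivative_eq_intros)
next
  case (Acoord j)
  show ?case
  proof (rule exI[of _ "\<lambda>N x. axis d 1 $ j"], rule exI[of _ "\<lambda>x. axis d 1 $ j"], intro conjI allI)
    show "(\<lambda>N x. axis d 1 $ j, \<lambda>x. axis d 1 $ j) \<in> Aset" by (rule Aconst0)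
    fix x :: "real^'a"
    have "((\<lambda>t. x $ j + t * axis d 1 $ j) has_real_derivative axis d 1 $ j) (at 0)"
      by (auto intro!: derivative_eq_intros)
    then show "((\<lambda>t. (x + t *\<^sub>R axis d 1) $ j) has_real_derivative axis d 1 $ j) (at 0)"
      by simp
    then show "((\<lambda>t. (x + t *\<^sub>R axis d 1) $ j) has_real_derivative axis d 1 $ j) (at 0)" .
  qed
next
  case (Aadd F f G g)
  from Aadd.IH(1) obtain F' f' where 1: "(F', f') \<in> Aset" "\<forall>N x. ((\<lambda>t. F N (x + t *\<^sub>R axis d 1)) has_real_derivative F' N x) (at 0)
             \<and> ((\<lambda>t. f (x + t *\<^sub>R axis d 1)) has_real_derivative f' x) (at 0)" by blast
  from Aadd.IH(2) obtain G' g' where 2: "(G', g') \<in> Aset" "\<forall>N x. ((\<lambda>t. G N (x + t *\<^sub>R axis d 1)) has_real_derivative G' N x) (at 0)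
             \<and> ((\<lambda>t. g (x + t *\<^sub>R axis d 1)) has_real_derivative g' x) (at 0)" by blast
  show ?case
    by (rule exI[of _ "\<lambda>N x. F' N x + G' N x"], rule exI[of _ "\<lambda>x. f' x + g' x"])
       (use 1 2 in \<open>auto intro: Aset.Aadd DERIV_add\<close>)
next
  case (Amult F f G g)
  from Amult.IH(1) obtain F' f' where 1: "(F', f') \<in> Aset" "\<forall>N x. ((\<lambda>t. F N (x + t *\<^sub>R axis d 1)) has_real_derivative F' N x) (at 0)
             \<and> ((\<lambda>t. f (x + t *\<^sub>R axis d 1)) has_real_derivative f' x) (at 0)" by blast
  from Amult.IH(2) obtain G' g' where 2: "(G', g') \<in> Aset" "\<forall>N x. ((\<lambda>t. G N (x + t *\<^sub>R axis d 1)) has_real_derivative G' N x) (at 0)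
             \<and> ((\<lambda>t. g (x + t *\<^sub>R axis d 1)) has_real_derivative g' x) (at 0)" by blast
  show ?case
  proof (rule exI[of _ "\<lambda>N x. F' N x * G N x + F N x * G' N x"], rule exI[of _ "\<lambda>x. f' x * g x + f x * g' x"], intro conjI allI)
    show "(\<lambda>N x. F' N x * G N x + F N x * G' N x, \<lambda>x. f' x * g x + f x * g' x) \<in> Aset"
      by (intro Aset.Aadd Aset.Amult 1 2 Amult.hyps)
    fix N x
    show "((\<lambda>t. F N (x + t *\<^sub>R axis d 1) * G N (x + t *\<^sub>R axis d 1)) has_real_derivative F' N x * G N x + F N x * G' N x) (at 0)"
      using DERIV_mult'[OF conjunct1[OF 1(2)[rule_format, of N x]] conjunct1[OF 2(2)[rule_format, of N x]]]
      by (simp add: algebra_simps)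
    show "((\<lambda>t. f (x + t *\<^sub>R axis d 1) * g (x + t *\<^sub>R axis d 1)) has_real_derivative f' x * g x + f x * g' x) (at 0)"
      using DERIV_mult'[OF conjunct2[OF 1(2)[rule_format, of N x]] conjunct2[OF 2(2)[rule_format, of N x]]]
      by (simp add: algebra_simps)
  qed
next
  case (Acomp F f cN c)
  from Acomp.IH obtain F' f' where 1: "(F', f') \<in> Aset" "\<forall>N x. ((\<lambda>t. F N (x + t *\<^sub>R axis d 1)) has_real_derivative F' N x) (at 0)
             \<and> ((\<lambda>t. f (x + t *\<^sub>R axis d 1)) has_real_derivative f' x) (at 0)" by blast
  have hd: "(\<lambda>N. diffs (cN N), diffs c) \<in> Hc" by (rule Hc_diffs[OF Acomp.hyps(2)])
  show ?case
  proof (rule exI[of _ "\<lambda>N x. pw (diffs (cN N)) (F N x) * F' N x"], rule exI[of _ "\<lambda>x. pw (diffs c) (f x) * f' x"], intro conjI allI)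
    show "(\<lambda>N x. pw (diffs (cN N)) (F N x) * F' N x, \<lambda>x. pw (diffs c) (f x) * f' x) \<in> Aset"
      by (intro Aset.Amult Aset.Acomp 1 Acomp.hyps hd)
    fix N x
    have p1: "(pw (cN N) has_real_derivative pw (diffs (cN N)) (F N x)) (at (F N (x + 0 *\<^sub>R axis d 1)))"
      using pw_deriv[of "cN N"] Hc_summable(1)[OF Acomp.hyps(2)] by simp
    show "((\<lambda>t. pw (cN N) (F N (x + t *\<^sub>R axis d 1))) has_real_derivative pw (diffs (cN N)) (F N x) * F' N x) (at 0)"
      by (rule DERIV_chain2[OF p1 conjunct1[OF 1(2)[rule_format, of N x]]])
    have p2: "(pw c has_real_derivative pw (diffs c) (f x)) (at (f (x + 0 *\<^sub>R axis d 1)))"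
      using pw_deriv[of c] Hc_summable(2)[OF Acomp.hyps(2)] by simp
    show "((\<lambda>t. pw c (f (x + t *\<^sub>R axis d 1))) has_real_derivative pw (diffs c) (f x) * f' x) (at 0)"
      by (rule DERIV_chain2[OF p2 conjunct2[OF 1(2)[rule_format, of N x]]])
  qed
qed

lemma pw_cont: "(\<And>w. summable (\<lambda>k. c k * w ^ k)) \<Longrightarrow> continuous_on S (pw c)"
  by (intro continuous_at_imp_continuous_on ballI DERIV_isCont[OF pw_deriv]) auto

lemma A_cont:
  assumes "(F, f) \<in> Aset"
  shows "continuous_on UNIV f \<and> (\<forall>N. continuous_on UNIV (F N))"
  using assms
proof (induction rule: Aset.induct)
  case (Acomp F f cN c)
  have c1: "continuous_on UNIV (pw c)" "continuous_on UNIV (pw (cN N))" for N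
    using pw_cont Hc_summable[OF Acomp.hyps(2)] by blast+
  show ?case using Acomp.IH c1 by (auto intro: continuous_on_compose2[of UNIV])
qed (auto intro!: continuous_intros)

lemma cont_bounded:
  fixes f :: "real^'n::finite \<Rightarrow> real"
  assumes "continuous_on UNIV f" "compact K"
  obtains M where "M > 0" "\<And>x. x \<in> K \<Longrightarrow> \<bar>f x\<bar> \<le> M"
proof -
  have "compact (f ` K)" by (rule compact_continuous_image[OF continuous_on_subset[OF assms(1)] assms(2)]) simp
  then obtain B where B: "\<forall>y\<in>f ` K. norm y \<le> B" using compact_imp_bounded bounded_iff by metis
  show ?thesis by (rule that[of "\<bar>B\<bar> + 1"]) (use B in force)+
qed

lemma A_unif:
  assumes "(F, f) \<in> Aset" "compact K"
  shows "\<epsilon> > 0 \<Longrightarrow> \<forall>\<^sub>F N in sequentially. \<forall>x\<in>K. \<bar>F N x - f x\<bar> < \<epsilon>"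
  using assms(1)
proof (induction arbitrary: \<epsilon> rule: Aset.induct)
  case (Aconst a l)
  have "\<forall>\<^sub>F N in sequentially. dist (a N) l < \<epsilon>" using Aconst.hyps Aconst.prems tendsto_iff by blast
  then show ?case by (rule eventually_mono) (simp add: dist_real_def)
next
  case (Acoord j)
  then show ?case by simp
next
  case (Aadd F f G g)
  have "\<forall>\<^sub>F N in sequentially. (\<forall>x\<in>K. \<bar>F N x - f x\<bar> < \<epsilon>/2) \<and> (\<forall>x\<in>K. \<bar>G N x - g x\<bar> < \<epsilon>/2)"
    using Aadd.prems by (intro eventually_conj Aadd.IH) auto
  then show ?case
  proof (rule eventually_mono, intro ballI)
    fix N x assume h: "(\<forall>x\<in>K. \<bar>F N x - f x\<bar> < \<epsilon>/2) \<and> (\<forall>x\<in>K. \<bar>G N x - g x\<bar> < \<epsilon>/2)" "x \<in> K"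
    then have "\<bar>F N x - f x\<bar> < \<epsilon>/2" "\<bar>G N x - g x\<bar> < \<epsilon>/2" by auto
    then show "\<bar>F N x + G N x - (f x + g x)\<bar> < \<epsilon>" by linarith
  qed
next
  case (Amult F f G g)
  obtain Mf where Mf: "Mf > 0" "\<And>x. x \<in> K \<Longrightarrow> \<bar>f x\<bar> \<le> Mf"
    using cont_bounded[OF conjunct1[OF A_cont[OF Amult.hyps(1)]] assms(2)] by metis
  obtain Mg where Mg: "Mg > 0" "\<And>x. x \<in> K \<Longrightarrow> \<bar>g x\<bar> \<le> Mg"
    using cont_bounded[OF conjunct1[OF A_cont[OF Amult.hyps(2)]] assms(2)] by metis
  have "\<forall>\<^sub>F N in sequentially. (\<forall>x\<in>K. \<bar>F N x - f x\<bar> < \<epsilon>/(2*(Mg+1))) \<and> (\<forall>x\<in>K. \<bar>G N x - g x\<bar> < min 1 (\<epsilon>/(2*Mf)))"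
    using Amult.prems Mf Mg by (intro eventually_conj Amult.IH) auto
  then show ?case
  proof (rule eventually_mono, intro ballI)
    fix N x assume h: "(\<forall>x\<in>K. \<bar>F N x - f x\<bar> < \<epsilon>/(2*(Mg+1))) \<and> (\<forall>x\<in>K. \<bar>G N x - g x\<bar> < min 1 (\<epsilon>/(2*Mf)))" "x \<in> K"
    have a: "\<bar>F N x - f x\<bar> < \<epsilon>/(2*(Mg+1))" and b: "\<bar>G N x - g x\<bar> < min 1 (\<epsilon>/(2*Mf))" using h by auto
    have G: "\<bar>G N x\<bar> \<le> Mg + 1" using b Mg(2)[OF h(2)] by linarith
    have "F N x * G N x - f x * g x = (F N x - f x) * G N x + f x * (G N x - g x)" by (simp add: algebra_simps)
    also have "\<bar>\<dots>\<bar> \<le> \<bar>F N x - f x\<bar> * \<bar>G N x\<bar> + \<bar>f x\<bar> * \<bar>G N x - g x\<bar>"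
      by (metis abs_mult abs_triangle_ineq)
    also have "\<dots> < \<epsilon>/(2*(Mg+1)) * (Mg + 1) + Mf * (\<epsilon>/(2*Mf))"
    proof (rule add_less_le_mono)
      have "\<bar>F N x - f x\<bar> * \<bar>G N x\<bar> \<le> \<bar>F N x - f x\<bar> * (Mg + 1)"
        using G by (intro mult_left_mono) auto
      also have "\<dots> < \<epsilon>/(2*(Mg+1)) * (Mg + 1)"
        using a Mg by (intro mult_strict_right_mono) auto
      finally show "\<bar>F N x - f x\<bar> * \<bar>G N x\<bar> < \<epsilon>/(2*(Mg+1)) * (Mg + 1)" .
      show "\<bar>f x\<bar> * \<bar>G N x - g x\<bar> \<le> Mf * (\<epsilon>/(2*Mf))"
        using b Mf(2)[OF h(2)] by (intro mult_mono) auto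
    qed
    also have "\<dots> = \<epsilon>" using Mf Mg by (simp add: field_simps)
    finally show "\<bar>F N x * G N x - f x * g x\<bar> < \<epsilon>" .
  qed
next
  case (Acomp F f cN c)
  obtain M where M: "M > 0" "\<And>x. x \<in> K \<Longrightarrow> \<bar>f x\<bar> \<le> M"
    using cont_bounded[OF conjunct1[OF A_cont[OF Acomp.hyps(1)]] assms(2)] by metis
  have "uniformly_continuous_on (cball 0 (M+1)) (pw c)"
    by (rule compact_uniformly_continuous[OF pw_cont]) (use Hc_summable[OF Acomp.hyps(2)] in auto)
  then obtain d where d: "d > 0" "\<And>u v. u \<in> cball 0 (M+1) \<Longrightarrow> v \<in> cball 0 (M+1) \<Longrightarrow> dist u v < d \<Longrightarrow> dist (pw c u) (pw c v) < \<epsilon>/2"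
    unfolding uniformly_continuous_on_def using Acomp.prems by (metis half_gt_zero)
  have "\<forall>\<^sub>F N in sequentially. (\<forall>x\<in>K. \<bar>F N x - f x\<bar> < min 1 d) \<and> (\<forall>w. \<bar>w\<bar> \<le> M + 1 \<longrightarrow> \<bar>pw (cN N) w - pw c w\<bar> < \<epsilon>/2)"
    using Acomp.prems d by (intro eventually_conj Acomp.IH Hc_unif[OF Acomp.hyps(2)]) auto
  then show ?case
  proof (rule eventually_mono, intro ballI)
    fix N x assume h: "(\<forall>x\<in>K. \<bar>F N x - f x\<bar> < min 1 d) \<and> (\<forall>w. \<bar>w\<bar> \<le> M + 1 \<longrightarrow> \<bar>pw (cN N) w - pw c w\<bar> < \<epsilon>/2)" "x \<in> K"
    have a: "\<bar>F N x - f x\<bar> < min 1 d" using h by auto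
    have F: "\<bar>F N x\<bar> \<le> M + 1" using a M(2)[OF h(2)] by linarith
    have b: "\<bar>pw (cN N) (F N x) - pw c (F N x)\<bar> < \<epsilon>/2" using h(1) F by auto
    have c: "\<bar>pw c (F N x) - pw c (f x)\<bar> < \<epsilon>/2"
      using d(2)[of "F N x" "f x"] F M(2)[OF h(2)] a by (auto simp: dist_real_def)
    show "\<bar>pw (cN N) (F N x) - pw c (f x)\<bar> < \<epsilon>" using b c by linarith
  qed
qed

lemma A_pderivs:
  assumes "(F, f) \<in> Aset"
  shows "\<exists>G g. (G, g) \<in> Aset \<and> (\<forall>N. pderivs is (F N) = G N) \<and> pderivs is f = g"
proof (induction "is")
  case Nil then show ?case using assms by auto
next
  case (Cons i "is")
  then obtain G g where G: "(G, g) \<in> Aset" "\<forall>N. pderivs is (F N) = G N" "pderivs is f = g" by blast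
  from A_deriv[OF G(1), of i] obtain G' g' where G': "(G', g') \<in> Aset"
    "\<forall>N x. ((\<lambda>t. G N (x + t *\<^sub>R axis i 1)) has_real_derivative G' N x) (at 0)
             \<and> ((\<lambda>t. g (x + t *\<^sub>R axis i 1)) has_real_derivative g' x) (at 0)" by blast
  show ?case
  proof (intro exI conjI allI)
    show "(G', g') \<in> Aset" by (rule G'(1))
    fix N
    show "pderivs (i # is) (F N) = G' N"
      using G G' by (auto simp: pderiv_axis_def fun_eq_iff has_real_derivative_iff_has_vector_derivative intro!: vector_derivative_at)
  next
    show "pderivs (i # is) f = g'"
      using G G' by (auto simp: pderiv_axis_def fun_eq_iff has_real_derivative_iff_has_vector_derivative intro!: vector_derivative_at)
  qed
qed

lemma A_smooth:
  assumes "(F, f) \<in> Aset"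
  shows "smooth_in U (F N)" "smooth_in U f"
proof -
  have "(\<lambda>t. pderivs is (F N) (x + t *\<^sub>R axis i 1)) differentiable at 0 \<and> (\<lambda>t. pderivs is f (x + t *\<^sub>R axis i 1)) differentiable at 0" for "is" i x
  proof -
    from A_pderivs[OF assms, of "is"] obtain G g where G: "(G, g) \<in> Aset" "\<forall>N. pderivs is (F N) = G N" "pderivs is f = g" by blast
    from A_deriv[OF G(1), of i] obtain G' g' where G': 
      "\<forall>N x. ((\<lambda>t. G N (x + t *\<^sub>R axis i 1)) has_real_derivative G' N x) (at 0)
             \<and> ((\<lambda>t. g (x + t *\<^sub>R axis i 1)) has_real_derivative g' x) (at 0)" by blast
    show ?thesis using G G' by (auto simp: has_real_derivative_iff_has_vector_derivative intro: differentiableI_vector)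
  qed
  then show "smooth_in U (F N)" "smooth_in U f" unfolding smooth_in_def by auto
qed

lemma A_conv:
  assumes "(F, f) \<in> Aset" "compact K"
  shows "\<epsilon> > 0 \<Longrightarrow> \<forall>\<^sub>F N in sequentially. \<forall>x\<in>K. \<bar>pderivs is (F N) x - pderivs is f x\<bar> < \<epsilon>"
    and "\<exists>M. \<forall>x\<in>K. \<bar>pderivs is f x\<bar> \<le> M"
proof -
  from A_pderivs[OF assms(1), of "is"] obtain G g where G: "(G, g) \<in> Aset" "\<forall>N. pderivs is (F N) = G N" "pderivs is f = g" by blast
  show "\<epsilon> > 0 \<Longrightarrow> \<forall>\<^sub>F N in sequentially. \<forall>x\<in>K. \<bar>pderivs is (F N) x - pderivs is f x\<bar> < \<epsilon>"
    using A_unif[OF G(1) assms(2)] G by simp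
  obtain M where "M > 0" "\<And>x. x \<in> K \<Longrightarrow> \<bar>g x\<bar> \<le> M"
    using cont_bounded[OF conjunct1[OF A_cont[OF G(1)]] assms(2)] by metis
  then show "\<exists>M. \<forall>x\<in>K. \<bar>pderivs is f x\<bar> \<le> M" using G by auto
qed

lemma line_deriv:
  fixes y :: "real^'k::finite"
  shows "((\<lambda>t. y + t *\<^sub>R axis d 1) has_derivative (\<lambda>t. t *\<^sub>R axis d 1)) (at t0)"
  by (intro derivative_eq_intros) auto

lemma line_norm_deriv:
  fixes y :: "real^'k::finite"
  assumes "y \<noteq> 0"
  shows "((\<lambda>t. norm (y + t *\<^sub>R axis d 1)) has_real_derivative (y $ d / norm y)) (at 0)"
proof -
  have n: "(norm has_derivative (\<lambda>h. h \<bullet> sgn (y + 0 *\<^sub>R axis d 1))) (at (y + 0 *\<^sub>R axis d 1))"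
    using has_derivative_norm[of y] assms by simp
  have hd: "((\<lambda>t. norm (y + t *\<^sub>R axis d 1)) has_derivative (\<lambda>t. (t *\<^sub>R axis d 1) \<bullet> sgn (y + 0 *\<^sub>R axis d 1))) (at 0)"
    using has_derivative_compose[OF line_deriv n] by (simp add: o_def)
  have eq: "(\<lambda>t. (t *\<^sub>R axis d 1) \<bullet> sgn (y + 0 *\<^sub>R axis d 1)) = (\<lambda>t. (y $ d / norm y) * t)"
    by (auto simp: sgn_div_norm inner_axis' divide_inverse)
  from hd[unfolded eq] show ?thesis unfolding has_field_derivative_def .
qed

lemma line_inner_deriv:
  fixes y q :: "real^'k::finite"
  shows "((\<lambda>t. (y + t *\<^sub>R axis d 1) \<bullet> q) has_real_derivative q $ d) (at t0)"
proof -
  have e: "(\<lambda>t. (y + t *\<^sub>R axis d 1) \<bullet> q) = (\<lambda>t. y \<bullet> q + t * q $ d)"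
    by (auto simp: inner_add_left inner_axis')
  show ?thesis unfolding e by (auto intro!: derivative_eq_intros)
qed

lemma line_coord_deriv:
  fixes y :: "real^'k::finite"
  shows "((\<lambda>t. (y + t *\<^sub>R axis d 1) $ j) has_real_derivative axis d 1 $ j) (at t0)"
proof -
  have e: "(\<lambda>t. (y + t *\<^sub>R axis d 1) $ j) = (\<lambda>t. y $ j + t * axis d 1 $ j)" by auto
  show ?thesis unfolding e by (auto intro!: derivative_eq_intros)
qed

lemma line_invnorm_deriv:
  fixes y :: "real^'k::finite"
  assumes "y \<noteq> 0"
  shows "((\<lambda>t. 1 / norm (y + t *\<^sub>R axis d 1)) has_real_derivative (- (y $ d) * (1 / norm y) ^ 3)) (at 0)"
proof -
  have "((\<lambda>t. inverse (norm (y + t *\<^sub>R axis d 1))) has_real_derivative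
      - (inverse (norm (y + 0 *\<^sub>R axis d 1)) * (y $ d / norm y) * inverse (norm (y + 0 *\<^sub>R axis d 1)))) (at 0)"
    by (rule DERIV_inverse'[OF line_norm_deriv[OF assms]]) (use assms in simp)
  then show ?thesis using assms by (simp add: divide_inverse power3_eq_cube mult_ac)
qed

inductive_set SM :: "(real^'k::finite \<Rightarrow> real) set" where
  SMconst: "(\<lambda>x. c) \<in> SM"
| SMcoord: "(\<lambda>x. x $ j) \<in> SM"
| SMinv: "(\<lambda>x. 1 / norm x) \<in> SM"
| SMadd: "f \<in> SM \<Longrightarrow> g \<in> SM \<Longrightarrow> (\<lambda>x. f x + g x) \<in> SM"
| SMmult: "f \<in> SM \<Longrightarrow> g \<in> SM \<Longrightarrow> (\<lambda>x. f x * g x) \<in> SM"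
| SMpw: "f \<in> SM \<Longrightarrow> (\<And>w. summable (\<lambda>k. c k * w ^ k)) \<Longrightarrow> (\<lambda>x. pw c (f x)) \<in> SM"

lemma SM_deriv:
  assumes "f \<in> SM"
  shows "\<exists>g\<in>SM. \<forall>y. y \<noteq> 0 \<longrightarrow> ((\<lambda>t. f (y + t *\<^sub>R axis d 1)) has_real_derivative g y) (at 0)"
  using assms
proof (induction rule: SM.induct)
  case (SMconst c)
  show ?case by (rule bexI[of _ "\<lambda>x. 0"]) (auto intro: SM.SMconst)
next
  case (SMcoord j)
  show ?case by (rule bexI[of _ "\<lambda>x. axis d 1 $ j"]) (intro allI impI line_coord_deriv, rule SM.SMconst)
next
  case SMinv
  show ?case
  proof (rule bexI[of _ "\<lambda>x. (- 1) * x $ d * ((1 / norm x) * ((1 / norm x) * (1 / norm x)))"])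
    show "(\<lambda>x. (- 1) * x $ d * ((1 / norm x) * ((1 / norm x) * (1 / norm x)))) \<in> SM"
      by (intro SM.SMmult SM.SMconst SM.SMcoord SM.SMinv)
    show "\<forall>y. y \<noteq> 0 \<longrightarrow> ((\<lambda>t. 1 / norm (y + t *\<^sub>R axis d 1)) has_real_derivative
       (- 1) * y $ d * ((1 / norm y) * ((1 / norm y) * (1 / norm y)))) (at 0)"
      using line_invnorm_deriv[of _ d] by (auto simp: power3_eq_cube mult.assoc)
  qed
next
  case (SMadd f g)
  from SMadd.IH obtain f' g' where "f' \<in> SM" "g' \<in> SM"
    "\<forall>y. y \<noteq> 0 \<longrightarrow> ((\<lambda>t. f (y + t *\<^sub>R axis d 1)) has_real_derivative f' y) (at 0)"
    "\<forall>y. y \<noteq> 0 \<longrightarrow> ((\<lambda>t. g (y + t *\<^sub>R axis d 1)) has_real_derivative g' y) (at 0)" by blast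
  then show ?case by (intro bexI[of _ "\<lambda>x. f' x + g' x"]) (auto intro: SM.SMadd DERIV_add)
next
  case (SMmult f g)
  from SMmult.IH obtain f' g' where 1: "f' \<in> SM" "g' \<in> SM"
    "\<forall>y. y \<noteq> 0 \<longrightarrow> ((\<lambda>t. f (y + t *\<^sub>R axis d 1)) has_real_derivative f' y) (at 0)"
    "\<forall>y. y \<noteq> 0 \<longrightarrow> ((\<lambda>t. g (y + t *\<^sub>R axis d 1)) has_real_derivative g' y) (at 0)" by blast
  show ?case
  proof (intro bexI[of _ "\<lambda>x. f' x * g x + f x * g' x"] allI impI)
    show "(\<lambda>x. f' x * g x + f x * g' x) \<in> SM" by (intro SM.SMadd SM.SMmult 1 SMmult.hyps)
    fix y :: "real^'a" assume y: "y \<noteq> 0"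
    then show "((\<lambda>t. f (y + t *\<^sub>R axis d 1) * g (y + t *\<^sub>R axis d 1)) has_real_derivative f' y * g y + f y * g' y) (at 0)"
      using DERIV_mult'[OF 1(3)[rule_format, OF y] 1(4)[rule_format, OF y]]
      by (simp add: algebra_simps)
  qed
next
  case (SMpw f c)
  from SMpw.IH obtain f' where 1: "f' \<in> SM" 
    "\<forall>y. y \<noteq> 0 \<longrightarrow> ((\<lambda>t. f (y + t *\<^sub>R axis d 1)) has_real_derivative f' y) (at 0)" by blast
  have sd: "summable (\<lambda>k. diffs c k * w ^ k)" for w by (rule termdiff_converges_all[OF SMpw.hyps(2)])
  show ?case
  proof (intro bexI[of _ "\<lambda>x. pw (diffs c) (f x) * f' x"] allI impI)
    show "(\<lambda>x. pw (diffs c) (f x) * f' x) \<in> SM" by (intro SM.SMmult SM.SMpw 1 SMpw.hyps sd)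
    fix y :: "real^'a" assume y: "y \<noteq> 0"
    have p: "(pw c has_real_derivative pw (diffs c) (f y)) (at (f (y + 0 *\<^sub>R axis d 1)))"
      using pw_deriv[of c, OF SMpw.hyps(2)] by simp
    show "((\<lambda>t. pw c (f (y + t *\<^sub>R axis d 1))) has_real_derivative pw (diffs c) (f y) * f' y) (at 0)"
      by (rule DERIV_chain2[OF p 1(2)[rule_format, OF y]])
  qed
qed

lemma SM_cont:
  assumes "f \<in> SM"
  shows "continuous_on (- {0}) f"
  using assms
proof (induction rule: SM.induct)
  case SMinv
  show ?case by (intro continuous_intros) auto
next
  case (SMpw f c)
  have "continuous_on UNIV (pw c)" by (rule pw_cont) (rule SMpw.hyps)
  then show ?case using SMpw.IH by (auto intro: continuous_on_compose2[of UNIV])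
qed (auto intro!: continuous_intros)

lemma SM_pderivs:
  assumes "f \<in> SM"
  shows "\<exists>g\<in>SM. \<forall>y. y \<noteq> 0 \<longrightarrow> pderivs is f y = g y"
proof (induction "is")
  case Nil then show ?case using assms by auto
next
  case (Cons i "is")
  then obtain g where g: "g \<in> SM" "\<forall>y. y \<noteq> 0 \<longrightarrow> pderivs is f y = g y" by blast
  from SM_deriv[OF g(1), of i] obtain g' where g': "g' \<in> SM"
    "\<forall>y. y \<noteq> 0 \<longrightarrow> ((\<lambda>t. g (y + t *\<^sub>R axis i 1)) has_real_derivative g' y) (at 0)" by blast
  show ?case
  proof (intro bexI[OF _ g'(1)] allI impI)
    fix y :: "real^'a" assume y: "y \<noteq> 0"
    show "pderivs (i # is) f y = g' y"
      using pderiv_axis_from(1)[of "- {0}" y "pderivs is f" g i "g' y"] g g' y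
      by (simp add: has_real_derivative_iff_has_vector_derivative open_Compl)
  qed
qed

lemma SM_smooth:
  assumes "f \<in> SM"
  shows "smooth_in (- {0}) f" "continuous_on (- {0}) (pderivs is f)"
proof -
  show "smooth_in (- {0}) f" unfolding smooth_in_def
  proof (intro allI ballI)
    fix "is" i and y :: "real^'a" assume y: "y \<in> - {0}"
    from SM_pderivs[OF assms, of "is"] obtain g where g: "g \<in> SM" "\<forall>y. y \<noteq> 0 \<longrightarrow> pderivs is f y = g y" by blast
    from SM_deriv[OF g(1), of i] obtain g' where g': 
      "\<forall>y. y \<noteq> 0 \<longrightarrow> ((\<lambda>t. g (y + t *\<^sub>R axis i 1)) has_real_derivative g' y) (at 0)" by blast
    show "(\<lambda>t. pderivs is f (y + t *\<^sub>R axis i 1)) differentiable at 0"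
      using pderiv_axis_from(2)[of "- {0}" y "pderivs is f" g i "g' y"] g g' y
      by (simp add: has_real_derivative_iff_has_vector_derivative open_Compl)
  qed
  from SM_pderivs[OF assms, of "is"] obtain g where g: "g \<in> SM" "\<forall>y. y \<noteq> 0 \<longrightarrow> pderivs is f y = g y" by blast
  show "continuous_on (- {0}) (pderivs is f)"
    using continuous_on_cong[of "- {0}" "- {0}" "pderivs is f" g] SM_cont[OF g(1)] g(2) by auto
qed

definition acoef :: "real \<Rightarrow> nat \<Rightarrow> nat \<Rightarrow> real" where
  "acoef m N k = (\<Prod>i<k. ((real i - real N) * (real N + m - 1 + real i)) / ((real i + 1) * (real i + m / 2)))"

lemma acoef_0 [simp]: "acoef m N 0 = 1" by (simp add: acoef_def)

lemma acoef_Suc: "acoef m N (Suc k) = acoef m N k * (((real k - real N) * (real N + m - 1 + real k)) / ((real k + 1) * (real k + m / 2)))"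
  by (simp add: acoef_def)

lemma acoef_zero: "N < k \<Longrightarrow> acoef m N k = 0"
  unfolding acoef_def by (rule prod_zero) auto

lemma acoef_rec:
  assumes "m > 0"
  shows "(real k + 1) * (real k + m / 2) * acoef m N (Suc k) = (real k - real N) * (real N + m - 1 + real k) * acoef m N k"
proof -
  have "(real k + 1) * (real k + m / 2) \<noteq> 0" using assms by (simp add: add_pos_pos)
  then show ?thesis unfolding acoef_Suc by (simp add: field_simps)
qed

definition fsupp :: "(nat \<Rightarrow> real) \<Rightarrow> bool" where
  "fsupp c \<longleftrightarrow> (\<exists>M. \<forall>k\<ge>M. c k = 0)"

lemma fsupp_summable: "fsupp c \<Longrightarrow> summable (\<lambda>k. c k * w ^ k)"
proof -
  assume "fsupp c" then obtain M where M: "\<forall>k\<ge>M. c k = 0" unfolding fsupp_def by blast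
  show ?thesis by (rule summable_finite[of "{..<M}"]) (use M in auto)
qed

lemma fsupp_acoef: "fsupp (acoef m N)"
  unfolding fsupp_def by (rule exI[of _ "Suc N"]) (auto intro: acoef_zero)

lemma fsupp_diffs: "fsupp c \<Longrightarrow> fsupp (diffs c)"
proof -
  assume "fsupp c" then obtain M where M: "\<forall>k\<ge>M. c k = 0" unfolding fsupp_def by blast
  show ?thesis unfolding fsupp_def diffs_def by (rule exI[of _ M]) (use M in auto)
qed

definition sh :: "(nat \<Rightarrow> real) \<Rightarrow> nat \<Rightarrow> real" where
  "sh c k = (if k = 0 then 0 else c (k - 1))"

lemma fsupp_sh: "fsupp c \<Longrightarrow> fsupp (sh c)"
proof -
  assume "fsupp c" then obtain M where M: "\<forall>k\<ge>M. c k = 0" unfolding fsupp_def by blast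
  show ?thesis unfolding fsupp_def sh_def by (rule exI[of _ "Suc M"]) (use M in auto)
qed

lemma pw_sh:
  assumes "summable (\<lambda>k. c k * w ^ k)"
  shows "w * pw c w = pw (sh c) w"
proof -
  have "(\<lambda>k. c k * w ^ k) sums pw c w" using assms unfolding pw_def by (rule summable_sums)
  then have "(\<lambda>k. w * (c k * w ^ k)) sums (w * pw c w)" by (rule sums_mult)
  then have "(\<lambda>k. sh c (Suc k) * w ^ (Suc k)) sums (w * pw c w)" by (simp add: sh_def mult_ac)
  then have "(\<lambda>k. sh c k * w ^ k) sums (w * pw c w + sh c 0 * w ^ 0)" by (rule sums_Suc_iff[THEN iffD1])
  then show ?thesis unfolding pw_def by (simp add: sh_def sums_iff)
qed

lemma pw_add: "fsupp c \<Longrightarrow> fsupp d \<Longrightarrow> pw c w + pw d w = pw (\<lambda>k. c k + d k) w"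
  unfolding pw_def using suminf_add[OF fsupp_summable fsupp_summable] by (simp add: algebra_simps)

lemma pw_scale: "fsupp c \<Longrightarrow> a * pw c w = pw (\<lambda>k. a * c k) w"
  unfolding pw_def using suminf_mult[OF fsupp_summable[of c w], of a] by (simp add: mult.assoc)

lemma fsupp_add: "fsupp c \<Longrightarrow> fsupp d \<Longrightarrow> fsupp (\<lambda>k. c k + d k)"
proof -
  assume "fsupp c" "fsupp d" then obtain M M' where M: "\<forall>k\<ge>M. c k = 0" "\<forall>k\<ge>M'. d k = 0" unfolding fsupp_def by blast
  show ?thesis unfolding fsupp_def by (rule exI[of _ "max M M'"]) (use M in auto)
qed

lemma fsupp_scale: "fsupp c \<Longrightarrow> fsupp (\<lambda>k. a * c k)"
  unfolding fsupp_def by auto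

lemma pw_add': "fsupp c \<Longrightarrow> fsupp d \<Longrightarrow> pw (\<lambda>k. c k + d k) w = pw c w + pw d w"
  using pw_add by metis

lemma pw_scale': "fsupp c \<Longrightarrow> pw (\<lambda>k. a * c k) w = a * pw c w"
  using pw_scale by metis

lemma pw_zero: "pw (\<lambda>k. 0) w = 0" by (simp add: pw_def)

lemma acoef_ode:
  fixes N :: nat and m s :: real
  assumes "m > 0"
  defines "a \<equiv> acoef m N"
  shows "s * (1 - s) * pw (diffs (diffs a)) s + (m / 2 - m * s) * pw (diffs a) s + (real N * (real N + m - 1)) * pw a s = 0"
proof -
  let ?d = "diffs a" and ?dd = "diffs (diffs a)" and ?l = "real N * (real N + m - 1)"
  have fa: "fsupp a" unfolding a_def by (rule fsupp_acoef)
  have fd: "fsupp ?d" by (rule fsupp_diffs[OF fa])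
  have fdd: "fsupp ?dd" by (rule fsupp_diffs[OF fd])
  have e1: "s * (1 - s) * pw ?dd s = pw (sh ?dd) s + (-1) * pw (sh (sh ?dd)) s"
    using pw_sh[OF fsupp_summable[OF fdd]] pw_sh[OF fsupp_summable[OF fsupp_sh[OF fdd]]]
    by (simp add: algebra_simps)
  have e2: "(m / 2 - m * s) * pw ?d s = (m/2) * pw ?d s + (-m) * pw (sh ?d) s"
    using pw_sh[OF fsupp_summable[OF fd]] by (simp add: algebra_simps)
  define e where "e k = (sh ?dd k + (-1) * sh (sh ?dd) k) + ((m/2) * ?d k + (-m) * sh ?d k) + ?l * a k" for k
  have fe: "fsupp e" unfolding e_def
    by (intro fsupp_add fsupp_scale fsupp_sh fa fd fdd)
  have "s * (1 - s) * pw (diffs (diffs a)) s + (m / 2 - m * s) * pw (diffs a) s + ?l * pw a s = pw e s"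
    unfolding e1 e2 e_def
    by (simp only: pw_add' pw_scale' fsupp_add fsupp_scale fsupp_sh fa fd fdd)
  also have "e = (\<lambda>k. 0)"
  proof
    fix k show "e k = 0"
    proof (cases k)
      case 0
      have "(0 + 1) * (0 + m / 2) * a (Suc 0) = (0 - real N) * (real N + m - 1 + 0) * a 0"
        using acoef_rec[OF assms(1), of 0 N] unfolding a_def by simp
      then show ?thesis using 0 by (simp add: e_def sh_def diffs_def algebra_simps)
    next
      case (Suc j)
      have r: "(real (Suc j) + 1) * (real (Suc j) + m / 2) * a (Suc (Suc j)) = (real (Suc j) - real N) * (real N + m - 1 + real (Suc j)) * a (Suc j)"
        using acoef_rec[OF assms(1), of "Suc j" N] unfolding a_def by simp
      have s2: "sh (sh ?dd) (Suc j) = real j * (real j + 1) * a (Suc j)"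
        by (cases j) (auto simp: sh_def diffs_def algebra_simps)
      have "e k = (real j + 1) * (real j + 2) * a (Suc (Suc j)) - real j * (real j + 1) * a (Suc j)
          + (m/2) * (real j + 2) * a (Suc (Suc j)) - m * (real j + 1) * a (Suc j) + ?l * a (Suc j)"
        using Suc s2 by (simp add: e_def sh_def diffs_def algebra_simps)
      also have "\<dots> = 0" using r by (simp add: algebra_simps)
      finally show ?thesis .
    qed
  qed
  finally show ?thesis by (simp add: pw_zero)
qed

definition invn :: "real^'k::finite \<Rightarrow> real" where "invn y = 1 / norm y"
definition sfun :: "real^'k::finite \<Rightarrow> real^'k \<Rightarrow> real" where "sfun q y = (1 - (y \<bullet> q) * invn y) / 2"
definition S1 :: "real^'k::finite \<Rightarrow> 'k \<Rightarrow> real^'k \<Rightarrow> real" where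
  "S1 q i y = -(1/2) * (q$i * invn y + (y \<bullet> q) * (- (y$i) * invn y ^ 3))"
definition S1d :: "real^'k::finite \<Rightarrow> 'k \<Rightarrow> real^'k \<Rightarrow> real" where
  "S1d q i x = -(1/2) * (q$i * (-(x$i) * invn x ^ 3) + (q$i * (-(x$i) * invn x ^ 3) + (x \<bullet> q) * (- 1 * invn x ^ 3 + (-(x$i)) * (3 * invn x ^ 2 * (-(x$i) * invn x ^ 3)))))"

lemma pw_chain:
  assumes "\<And>w. summable (\<lambda>k. c k * w ^ k)" "(g has_real_derivative g') (at t)"
  shows "((\<lambda>t. pw c (g t)) has_real_derivative pw (diffs c) (g t) * g') (at t)"
  by (rule DERIV_chain2[OF pw_deriv[OF assms(1)] assms(2)])

lemma line_invn:
  fixes y :: "real^'k::finite"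
  assumes "y \<noteq> 0"
  shows "((\<lambda>t. invn (y + t *\<^sub>R axis d 1)) has_real_derivative (- (y $ d) * invn y ^ 3)) (at 0)"
  using line_invnorm_deriv[OF assms] unfolding invn_def .

lemma L_s:
  fixes y q :: "real^'k::finite"
  assumes "y \<noteq> 0"
  shows "((\<lambda>t. sfun q (y + t *\<^sub>R axis i 1)) has_real_derivative S1 q i y) (at 0)"
proof -
  have "((\<lambda>t. (1 - ((y + t *\<^sub>R axis i 1) \<bullet> q) * invn (y + t *\<^sub>R axis i 1)) / 2) has_real_derivative
      (0 - (((y + 0 *\<^sub>R axis i 1) \<bullet> q) * (- (y $ i) * invn y ^ 3) + q$i * invn (y + 0 *\<^sub>R axis i 1))) / 2) (at 0)"
    by (intro DERIV_cdivide DERIV_diff DERIV_const DERIV_mult' line_inner_deriv line_invn assms)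
  then show ?thesis unfolding sfun_def S1_def by (rule DERIV_cong) (simp add: field_simps)
qed

lemma L1:
  fixes y q :: "real^'k::finite"
  assumes "y \<noteq> 0" "\<And>w. summable (\<lambda>k. a k * w ^ k)"
  shows "((\<lambda>t. pw a (sfun q (y + t *\<^sub>R axis i 1))) has_real_derivative pw (diffs a) (sfun q y) * S1 q i y) (at 0)"
  using pw_chain[OF assms(2) L_s[OF assms(1)]] by simp

lemma L2:
  fixes x q :: "real^'k::finite"
  assumes "x \<noteq> 0"
  shows "((\<lambda>t. S1 q i (x + t *\<^sub>R axis i 1)) has_real_derivative S1d q i x) (at 0)"
proof -
  have c: "((\<lambda>t. (x + t *\<^sub>R axis i 1) $ i) has_real_derivative 1) (at 0)"
    using line_coord_deriv[of x i i 0] by simp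
  have "((\<lambda>t. -(1/2) * (q$i * invn (x + t *\<^sub>R axis i 1) + ((x + t *\<^sub>R axis i 1) \<bullet> q) * (- ((x + t *\<^sub>R axis i 1)$i) * invn (x + t *\<^sub>R axis i 1) ^ 3)))
     has_real_derivative -(1/2) * (q$i * (-(x$i) * invn x ^ 3) + (((x + 0 *\<^sub>R axis i 1) \<bullet> q) * (- ((x + 0 *\<^sub>R axis i 1)$i) * (of_nat 3 * ((-(x$i) * invn x ^ 3) * invn (x + 0 *\<^sub>R axis i 1) ^ (3 - Suc 0))) + - 1 * invn (x + 0 *\<^sub>R axis i 1) ^ 3)
        + q$i * (- ((x + 0 *\<^sub>R axis i 1)$i) * invn (x + 0 *\<^sub>R axis i 1) ^ 3)))) (at 0)"
    by (intro DERIV_cmult DERIV_add DERIV_mult' DERIV_const line_inner_deriv line_invn assms DERIV_minus c DERIV_power)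
  then show ?thesis unfolding S1_def S1d_def by (rule DERIV_cong) (simp add: field_simps)
qed

lemma L3:
  fixes x q :: "real^'k::finite"
  assumes "x \<noteq> 0" "\<And>w. summable (\<lambda>k. a k * w ^ k)"
  shows "((\<lambda>t. pw (diffs a) (sfun q (x + t *\<^sub>R axis i 1)) * S1 q i (x + t *\<^sub>R axis i 1)) has_real_derivative
     pw (diffs (diffs a)) (sfun q x) * S1 q i x * S1 q i x + pw (diffs a) (sfun q x) * S1d q i x) (at 0)"
proof -
  have sd: "summable (\<lambda>k. diffs a k * w ^ k)" for w by (rule termdiff_converges_all[OF assms(2)])
  show ?thesis
    using DERIV_mult'[OF pw_chain[OF sd L_s[OF assms(1)]] L2[OF assms(1)]] by (simp add: algebra_simps)
qed

lemma pderiv2_formula: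
  fixes x q :: "real^'k::finite"
  assumes "x \<noteq> 0" "\<And>w. summable (\<lambda>k. a k * w ^ k)"
  shows "pderivs [i, i] (\<lambda>y. pw a (sfun q y)) x =
     pw (diffs (diffs a)) (sfun q x) * S1 q i x * S1 q i x + pw (diffs a) (sfun q x) * S1d q i x"
proof -
  have o: "open (- {0::real^'k})" by (simp add: open_Compl)
  have p1: "\<forall>y\<in>- {0}. pderiv_axis i (\<lambda>y. pw a (sfun q y)) y = pw (diffs a) (sfun q y) * S1 q i y"
    using pderiv_axis_from(1)[OF o _ _ L1[unfolded has_real_derivative_iff_has_vector_derivative], of _ "\<lambda>y. pw a (sfun q y)"] assms(2)
    by auto
  show ?thesis
    using pderiv_axis_from(1)[OF o _ p1 L3[OF assms, unfolded has_real_derivative_iff_has_vector_derivative]] assms(1)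
    by simp
qed

lemma inner_sum_vec: "(x::real^'k::finite) \<bullet> y = (\<Sum>i\<in>UNIV. x$i * y$i)"
  by (simp add: inner_vec_def)

lemma lap_scalar:
  fixes x q :: "real^'k::finite"
  assumes x1: "norm x = 1" and q1: "norm q = 1" and m: "m = real CARD('k) - 1" "m > 0"
  shows "(\<Sum>i\<in>UNIV. pderivs [i, i] (\<lambda>y. pw (acoef m N) (sfun q y)) x)
       = - (real N * (real N + m - 1)) * pw (acoef m N) (sfun q x)"
proof -
  let ?a = "acoef m N"
  have sa: "summable (\<lambda>k. ?a k * w ^ k)" for w by (rule fsupp_summable[OF fsupp_acoef])
  have x0: "x \<noteq> 0" using x1 by auto
  define A where "A = x \<bullet> q"
  have inv1: "invn x = 1" using x1 by (simp add: invn_def)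
  have qq: "(\<Sum>i\<in>UNIV. q$i * q$i) = 1"
    using q1 by (metis inner_sum_vec norm_eq_1 power2_norm_eq_inner)
  have xx: "(\<Sum>i\<in>UNIV. x$i * x$i) = 1"
    using x1 by (metis inner_sum_vec norm_eq_1 power2_norm_eq_inner)
  have qx: "(\<Sum>i\<in>UNIV. q$i * x$i) = A"
    unfolding A_def inner_sum_vec by (simp add: mult.commute)
  have e1: "S1 q i x * S1 q i x = (1/4) * (q$i*q$i) - (A/2) * (q$i*x$i) + (A^2/4)*(x$i*x$i)" for i
    by (simp add: S1_def inv1 A_def algebra_simps power2_eq_square)
  have e2: "S1d q i x = (q$i*x$i) + A/2 - (3*A/2)*(x$i*x$i)" for i
    by (simp add: S1d_def inv1 A_def algebra_simps power2_eq_square)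
  have s1: "(\<Sum>i\<in>UNIV. S1 q i x * S1 q i x) = (1 - A^2) / 4"
  proof -
    have "(\<Sum>i\<in>UNIV. S1 q i x * S1 q i x) = (1/4) * (\<Sum>i\<in>UNIV. q$i*q$i) - (A/2) * (\<Sum>i\<in>UNIV. q$i*x$i) + (A^2/4) * (\<Sum>i\<in>UNIV. x$i*x$i)"
      unfolding e1 by (simp add: sum.distrib sum_subtractf sum_distrib_left)
    then show ?thesis using qq qx xx by (simp add: field_simps power2_eq_square)
  qed
  have s2: "(\<Sum>i\<in>UNIV. S1d q i x) = A * m / 2"
  proof -
    have "(\<Sum>i\<in>UNIV. S1d q i x) = (\<Sum>i\<in>UNIV. q$i*x$i) + real CARD('k) * (A/2) - (3*A/2) * (\<Sum>i\<in>UNIV. x$i*x$i)"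
      unfolding e2 by (simp add: sum.distrib sum_subtractf sum_distrib_left)
    also have "\<dots> = A + (m + 1) * (A/2) - 3*A/2" using qx xx m(1) by simp
    finally show ?thesis by (simp add: algebra_simps)
  qed
  have sf: "sfun q x = (1 - A) / 2" by (simp add: sfun_def inv1 A_def)
  have "(\<Sum>i\<in>UNIV. pderivs [i, i] (\<lambda>y. pw ?a (sfun q y)) x)
      = (\<Sum>i\<in>UNIV. pw (diffs (diffs ?a)) (sfun q x) * (S1 q i x * S1 q i x) + pw (diffs ?a) (sfun q x) * S1d q i x)"
    by (intro sum.cong refl) (simp only: pderiv2_formula[OF x0 sa] mult.assoc)
  also have "\<dots> = pw (diffs (diffs ?a)) (sfun q x) * ((1 - A^2) / 4) + pw (diffs ?a) (sfun q x) * (A * m / 2)"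
    by (simp add: sum.distrib sum_distrib_left[symmetric] s1 s2)
  also have "\<dots> = - (real N * (real N + m - 1)) * pw ?a (sfun q x)"
    using acoef_ode[OF m(2), of "sfun q x" N] unfolding sf
    by (simp add: field_simps power2_eq_square)
  finally show ?thesis .
qed

lemma SM_sum: "finite I \<Longrightarrow> (\<And>i. i \<in> I \<Longrightarrow> f i \<in> SM) \<Longrightarrow> (\<lambda>y. \<Sum>i\<in>I. f i y) \<in> SM"
proof (induction I rule: finite_induct)
  case empty then show ?case using SM.SMconst[of 0] by simp
next
  case (insert a I) then show ?case using SM.SMadd[of "f a" "\<lambda>y. \<Sum>i\<in>I. f i y"] by simp
qed

lemma sfun_SM: "sfun q \<in> SM"
proof -
  have "(\<lambda>y. 1/2 + (-1/2) * ((\<Sum>i\<in>UNIV. y$i * q$i) * (1 / norm y))) \<in> SM"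
    by (intro SM.SMadd SM.SMconst SM.SMmult SM_sum SM.SMcoord SM.SMinv) auto
  moreover have "(\<lambda>y. 1/2 + (-1/2) * ((\<Sum>i\<in>UNIV. y$i * q$i) * (1 / norm y))) = sfun q"
    by (auto simp: fun_eq_iff sfun_def invn_def inner_sum_vec field_simps)
  ultimately show ?thesis by simp
qed

lemma h_SM: "(\<lambda>y. pw (acoef m N) (sfun q y)) \<in> SM"
  by (rule SM.SMpw[OF sfun_SM fsupp_summable[OF fsupp_acoef]])

lemma eigen_general:
  fixes q :: "'j \<Rightarrow> real^'k::finite" and C :: "'j \<Rightarrow> 'b::real_normed_vector" and N :: nat and m :: real
  assumes J: "finite J" and q1: "\<forall>j\<in>J. norm (q j) = 1" and m: "m = real CARD('k) - 1" "m > 0"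
  defines "F \<equiv> (\<lambda>x. (\<lambda>p. \<Sum>j\<in>J. pw (acoef m N) ((1 - p \<bullet> q j) / 2) *\<^sub>R C j) (x /\<^sub>R norm x))"
  shows "smooth_on_open (- {0}) F \<and> (\<forall>x\<in>sphere 0 1. laplacian F x = - (real N * (real N + m - 1)) *\<^sub>R F x)"
proof -
  let ?a = "acoef m N"
  define h where "h j y = pw ?a (sfun (q j) y)" for j y
  have Feq: "F = (\<lambda>y. \<Sum>j\<in>J. h j y *\<^sub>R C j)"
  proof -
    have e: "(x /\<^sub>R norm x) \<bullet> v = (x \<bullet> v) * invn x" for x v :: "real^'k"
      unfolding invn_def inner_scaleR_left by (simp add: divide_inverse_commute)
    show ?thesis unfolding F_def h_def sfun_def e ..
  qed
  have o: "open (- {0::real^'k})" by (simp add: open_Compl)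
  have hSM: "h j \<in> SM" for j unfolding h_def by (rule h_SM)
  have hs: "smooth_in (- {0}) (h j)" for j by (rule SM_smooth(1)[OF hSM])
  have hsv: "smooth_in (- {0}) (\<lambda>y. h j y *\<^sub>R C j)" for j by (rule smooth_in_scale_vec[OF o hs])
  have PD: "\<forall>x\<in>- {0}. pderivs is F x = (\<Sum>j\<in>J. pderivs is (h j) x *\<^sub>R C j)" for "is"
  proof
    fix x :: "real^'k" assume x: "x \<in> - {0}"
    have "pderivs is F x = (\<Sum>j\<in>J. pderivs is (\<lambda>y. h j y *\<^sub>R C j) x)"
      unfolding Feq using conjunct2[OF pderivs_sum[OF o J, of "\<lambda>j y. h j y *\<^sub>R C j" "is"]] hsv x by blast
    also have "\<dots> = (\<Sum>j\<in>J. pderivs is (h j) x *\<^sub>R C j)"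
      by (intro sum.cong refl pderivs_scale_vec[OF o hs x])
    finally show "pderivs is F x = (\<Sum>j\<in>J. pderivs is (h j) x *\<^sub>R C j)" .
  qed
  have sm: "smooth_in (- {0}) F"
    unfolding Feq using conjunct1[OF pderivs_sum[OF o J, of "\<lambda>j y. h j y *\<^sub>R C j"]] hsv by blast
  have "smooth_on_open (- {0}) F"
    unfolding smooth_on_open_def
  proof (intro conjI allI o ballI)
    fix "is"
    have "continuous_on (- {0}) (\<lambda>x. \<Sum>j\<in>J. pderivs is (h j) x *\<^sub>R C j)"
      by (intro continuous_intros SM_smooth(2)[OF hSM])
    moreover have "continuous_on (- {0}) (pderivs is F) = continuous_on (- {0}) (\<lambda>x. \<Sum>j\<in>J. pderivs is (h j) x *\<^sub>R C j)"
      by (rule continuous_on_cong[OF refl PD[of "is", rule_format]])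
    ultimately show "continuous_on (- {0}) (pderivs is F)" by simp
  next
    fix "is" i x assume "x \<in> - {0::real^'k}"
    then show "(\<lambda>t. pderivs is F (x + t *\<^sub>R axis i 1)) differentiable at 0"
      using sm unfolding smooth_in_def by blast
  qed
  moreover have "laplacian F x = - (real N * (real N + m - 1)) *\<^sub>R F x" if x: "x \<in> sphere 0 1" for x
  proof -
    have x0: "x \<in> - {0}" using x by auto
    have "laplacian F x = (\<Sum>i\<in>UNIV. \<Sum>j\<in>J. pderivs [i, i] (h j) x *\<^sub>R C j)"
      unfolding laplacian_def by (intro sum.cong refl) (rule PD[rule_format, OF x0])
    also have "\<dots> = (\<Sum>j\<in>J. (\<Sum>i\<in>UNIV. pderivs [i, i] (h j) x) *\<^sub>R C j)"
      by (subst sum.swap) (simp add: scaleR_sum_left)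
    also have "\<dots> = (\<Sum>j\<in>J. (- (real N * (real N + m - 1)) * h j x) *\<^sub>R C j)"
    proof (intro sum.cong refl)
      fix j assume "j \<in> J"
      then have "norm (q j) = 1" using q1 by auto
      moreover have "norm x = 1" using x by simp
      ultimately have "(\<Sum>i\<in>UNIV. pderivs [i, i] (h j) x) = - (real N * (real N + m - 1)) * h j x"
        using lap_scalar[of x "q j" m N] m unfolding h_def by blast
      then show "(\<Sum>i\<in>UNIV. pderivs [i, i] (h j) x) *\<^sub>R C j = (- (real N * (real N + m - 1)) * h j x) *\<^sub>R C j"
        by (simp only:)
    qed
    also have "\<dots> = - (real N * (real N + m - 1)) *\<^sub>R F x"
      unfolding Feq by (simp add: scaleR_sum_right)
    finally show ?thesis .
  qed
  ultimately show ?thesis by blast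
qed

lemma summable_fact_dom:
  fixes D :: "nat \<Rightarrow> real"
  assumes "\<And>k. \<bar>D k\<bar> \<le> C * B ^ k / fact k"
  shows "summable (\<lambda>k. D k * R ^ k)"
proof (rule summable_comparison_test[OF _ summable_mult[OF summable_exp[of "\<bar>B\<bar> * \<bar>R\<bar>"], of "\<bar>C\<bar>"]], intro exI allI impI)
  fix k
  have "C * B ^ k \<le> \<bar>C\<bar> * \<bar>B\<bar> ^ k" by (metis abs_ge_self abs_mult power_abs)
  then have "C * B ^ k / fact k \<le> \<bar>C\<bar> * \<bar>B\<bar> ^ k / fact k" by (rule divide_right_mono) simp
  then have "\<bar>D k\<bar> \<le> \<bar>C\<bar> * \<bar>B\<bar> ^ k / fact k"
    using assms[of k] by linarith
  then have "\<bar>D k\<bar> * \<bar>R\<bar> ^ k \<le> \<bar>C\<bar> * \<bar>B\<bar> ^ k / fact k * \<bar>R\<bar> ^ k"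
    by (rule mult_right_mono) simp
  then show "norm (D k * R ^ k) \<le> \<bar>C\<bar> * (inverse (fact k) * (\<bar>B\<bar> * \<bar>R\<bar>) ^ k)"
    by (simp add: abs_mult power_abs power_mult_distrib divide_inverse mult_ac)
qed

definition c1 :: "nat \<Rightarrow> real" where "c1 k = (-1)^k / fact (2*k+2)"
definition s1 :: "nat \<Rightarrow> real" where "s1 k = (-1)^k / fact (2*k+1)"
definition c1N :: "nat \<Rightarrow> nat \<Rightarrow> real" where "c1N N k = c1 k * (1 / (real N)^2) ^ k"
definition sN :: "nat \<Rightarrow> nat \<Rightarrow> real" where "sN N k = s1 k * (1 / (real N)^2) ^ k"
definition c1L :: "nat \<Rightarrow> real" where "c1L k = (if k = 0 then 1/2 else 0)"
definition sL :: "nat \<Rightarrow> real" where "sL k = (if k = 0 then 1 else 0)"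

lemma pw_single: "pw (\<lambda>k. if k = 0 then a else 0) w = a"
proof -
  have "(\<lambda>k. (if k = 0 then a else 0) * w ^ k) = (\<lambda>k. if k = 0 then a else 0)" by auto
  moreover have "(\<lambda>k. if k = 0 then a else 0) sums a" using sums_single[of 0 "\<lambda>_. a"] by simp
  ultimately show ?thesis unfolding pw_def by (simp add: sums_iff)
qed

lemma pw_c1L: "pw c1L w = 1/2" unfolding c1L_def by (rule pw_single)
lemma pw_sL: "pw sL w = 1" unfolding sL_def by (rule pw_single)

lemma inv_sq_le1: "\<bar>(1 / (real N)^2) ^ k\<bar> \<le> 1"
proof (cases "N = 0")
  case True then show ?thesis by (cases k) auto
next
  case False
  then have "0 \<le> 1 / (real N)^2" "1 / (real N)^2 \<le> 1" by (auto simp: field_simps)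
  then show ?thesis by (simp add: power_le_one)
qed

lemma inv_sq_lim: "k > 0 \<Longrightarrow> (\<lambda>N. (1 / (real N)^2) ^ k) \<longlonglongrightarrow> 0"
proof -
  assume k: "k > 0"
  have "(\<lambda>N. inverse (real N)) \<longlonglongrightarrow> 0" by (rule lim_inverse_n)
  from tendsto_power[OF this, of "2*k"] have "(\<lambda>N. inverse (real N) ^ (2*k)) \<longlonglongrightarrow> 0 ^ (2*k)" .
  moreover have "0 ^ (2*k) = (0::real)" using k by simp
  ultimately have "(\<lambda>N. inverse (real N) ^ (2*k)) \<longlonglongrightarrow> 0" by simp
  moreover have "(\<lambda>N. (1 / (real N)^2) ^ k) = (\<lambda>N. inverse (real N) ^ (2*k))"
    by (simp add: power_mult divide_inverse power_inverse)
  ultimately show ?thesis by simp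
qed

lemma fact_dom_aux: "\<bar>1 / fact (2 * k + j)\<bar> \<le> (1::real) * 1 ^ k / fact k"
proof -
  have "1 / fact (2*k+j) \<le> (1::real) / fact k" by (rule divide_left_mono[OF fact_mono]) auto
  then show ?thesis by simp
qed

lemma Hc_c1: "(c1N, c1L) \<in> Hc"
  unfolding Hc_def
proof (intro CollectI case_prodI conjI allI exI[of _ "\<lambda>k. 1 / fact (2*k+2)"])
  fix k
  show "(\<lambda>N. c1N N k) \<longlonglongrightarrow> c1L k"
  proof (cases "k = 0")
    case True then show ?thesis by (simp add: c1N_def c1L_def c1_def)
  next
    case False
    then show ?thesis unfolding c1N_def c1L_def using tendsto_mult[OF tendsto_const inv_sq_lim, of k "c1 k"] by simp
  qed
next
  fix N k
  show "\<bar>c1N N k\<bar> \<le> 1 / fact (2*k+2)"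
  proof -
    have a: "\<bar>c1 k\<bar> = 1 / fact (2*k+2)" by (simp add: c1_def)
    have "\<bar>c1 k\<bar> * \<bar>(1 / (real N)^2) ^ k\<bar> \<le> \<bar>c1 k\<bar>" by (rule mult_left_le[OF inv_sq_le1]) simp
    then show ?thesis unfolding c1N_def abs_mult a .
  qed
next
  fix R :: real
  show "summable (\<lambda>k. 1 / fact (2*k+2) * R ^ k)"
    by (rule summable_fact_dom[of _ 1 1], rule fact_dom_aux)
qed

lemma Hc_s1: "(sN, sL) \<in> Hc"
  unfolding Hc_def
proof (intro CollectI case_prodI conjI allI exI[of _ "\<lambda>k. 1 / fact (2*k+1)"])
  fix k
  show "(\<lambda>N. sN N k) \<longlonglongrightarrow> sL k"
  proof (cases "k = 0")
    case True then show ?thesis by (simp add: sN_def sL_def s1_def)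
  next
    case False
    then show ?thesis unfolding sN_def sL_def using tendsto_mult[OF tendsto_const inv_sq_lim, of k "s1 k"] by simp
  qed
next
  fix N k
  show "\<bar>sN N k\<bar> \<le> 1 / fact (2*k+1)"
  proof -
    have a: "\<bar>s1 k\<bar> = 1 / fact (2*k+1)" by (simp add: s1_def)
    have "\<bar>s1 k\<bar> * \<bar>(1 / (real N)^2) ^ k\<bar> \<le> \<bar>s1 k\<bar>" by (rule mult_left_le[OF inv_sq_le1]) simp
    then show ?thesis unfolding sN_def abs_mult a .
  qed
next
  fix R :: real
  show "summable (\<lambda>k. 1 / fact (2*k+1) * R ^ k)"
    by (rule summable_fact_dom[of _ 1 1], rule fact_dom_aux)
qed

lemma pw_rescale: "pw (\<lambda>k. c k * t ^ k) w = pw c (t * w)"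
  unfolding pw_def by (simp add: power_mult_distrib mult_ac)

lemma cos_C1: "cos a = 1 - a^2 * pw c1 (a^2)"
proof (cases "a = 0")
  case True then show ?thesis by simp
next
  case False
  have "(\<lambda>n. (- 1) ^ n / fact (2 * n) * a ^ (2 * n)) sums cos a" by (rule cos_paired)
  then have "(\<lambda>n. (- 1) ^ (Suc n) / fact (2 * Suc n) * a ^ (2 * Suc n)) sums (cos a - 1)"
    using sums_Suc_iff[of "\<lambda>n. (- 1) ^ n / fact (2 * n) * a ^ (2 * n)" "cos a - 1"] by simp
  moreover have "(\<lambda>n. (- 1) ^ (Suc n) / fact (2 * Suc n) * a ^ (2 * Suc n)) = (\<lambda>n. (- (a^2)) * (c1 n * (a^2) ^ n))"
    by (auto simp: c1_def power_mult power2_eq_square)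
  ultimately have "(\<lambda>n. (- (a^2)) * (c1 n * (a^2) ^ n)) sums (cos a - 1)" by simp
  from sums_divide[OF this, of "- (a^2)"]
  have "(\<lambda>n. (- (a^2)) * (c1 n * (a^2) ^ n) / (- (a^2))) sums ((cos a - 1) / (- (a^2)))" .
  then have "(\<lambda>n. c1 n * (a^2) ^ n) sums ((cos a - 1) / (- (a^2)))" using False by simp
  then have "pw c1 (a^2) = (cos a - 1) / (- (a^2))" unfolding pw_def by (rule sums_unique[symmetric])
  then show ?thesis using False by (simp add: field_simps)
qed

lemma sin_S1: "a \<noteq> 0 \<Longrightarrow> sin a / a = pw s1 (a^2)"
proof -
  assume a: "a \<noteq> 0"
  have "(\<lambda>n. (- 1) ^ n / fact (2 * n + 1) * a ^ (2 * n + 1)) sums sin a" by (rule sin_paired)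
  moreover have "(\<lambda>n. (- 1) ^ n / fact (2 * n + 1) * a ^ (2 * n + 1)) = (\<lambda>n. (s1 n * (a^2) ^ n) * a)"
    by (auto simp: s1_def power_mult power2_eq_square)
  ultimately have "(\<lambda>n. (s1 n * (a^2) ^ n) * a) sums sin a" by simp
  from sums_divide[OF this, of a] have "(\<lambda>n. (s1 n * (a^2) ^ n) * a / a) sums (sin a / a)" .
  then have "(\<lambda>n. s1 n * (a^2) ^ n) sums (sin a / a)" using a by simp
  then show ?thesis unfolding pw_def by (rule sums_unique)
qed

definition bfac :: "real \<Rightarrow> nat \<Rightarrow> nat \<Rightarrow> real" where
  "bfac m N i = ((real i - real N) * (real N + m - 1 + real i)) / ((real N)^2 * ((real i + 1) * (real i + m / 2)))"
definition bN :: "real \<Rightarrow> real \<Rightarrow> nat \<Rightarrow> nat \<Rightarrow> real" where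
  "bN \<kappa> m N k = \<kappa> * (\<Prod>i<k. bfac m N i)"
definition bL :: "real \<Rightarrow> real \<Rightarrow> nat \<Rightarrow> real" where
  "bL \<kappa> m k = \<kappa> * (\<Prod>i<k. -1 / ((real i + 1) * (real i + m / 2)))"

lemma bN_coef:
  assumes "N \<ge> 1" "m > 0"
  shows "bN \<kappa> m N k * ((real N)^2) ^ k = \<kappa> * acoef m N k"
proof -
  have "(\<Prod>i<k. bfac m N i) * ((real N)^2) ^ k = (\<Prod>i<k. bfac m N i * (real N)^2)"
    by (simp add: prod.distrib)
  also have "\<dots> = acoef m N k" unfolding acoef_def
    by (intro prod.cong refl) (use assms in \<open>simp add: bfac_def\<close>)
  finally show ?thesis unfolding bN_def by (simp add: mult.assoc)
qed

lemma bN_rel: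
  assumes "N \<ge> 1" "m > 0"
  shows "\<kappa> * pw (acoef m N) s = pw (bN \<kappa> m N) ((real N)^2 * s)"
proof -
  have t: "bN \<kappa> m N k * ((real N)^2 * s) ^ k = \<kappa> * (acoef m N k * s ^ k)" for k
  proof -
    have "bN \<kappa> m N k * ((real N)^2 * s) ^ k = (bN \<kappa> m N k * ((real N)^2) ^ k) * s ^ k"
      by (simp add: power_mult_distrib mult.assoc)
    also have "\<dots> = \<kappa> * (acoef m N k * s ^ k)" by (simp add: bN_coef[OF assms] mult.assoc)
    finally show ?thesis .
  qed
  have "pw (bN \<kappa> m N) ((real N)^2 * s) = (\<Sum>k. \<kappa> * (acoef m N k * s ^ k))"
    unfolding pw_def t ..
  also have "\<dots> = \<kappa> * pw (acoef m N) s"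
    unfolding pw_def by (rule suminf_mult[OF fsupp_summable[OF fsupp_acoef]])
  finally show ?thesis by simp
qed

lemma bfac_lim: "m > 0 \<Longrightarrow> (\<lambda>N. bfac m N i) \<longlonglongrightarrow> -1 / ((real i + 1) * (real i + m / 2))"
proof -
  assume m0: "m > 0"
  let ?d = "(real i + 1) * (real i + m / 2)"
  have d0: "?d \<noteq> 0" using m0 by (simp add: add_pos_pos)
  have L: "(\<lambda>N. (real i * inverse (real N) - 1) * ((m - 1 + real i) * inverse (real N) + 1) / ?d)
      \<longlonglongrightarrow> (real i * 0 - 1) * ((m - 1 + real i) * 0 + 1) / ?d"
    using d0 by (intro tendsto_intros lim_inverse_n) auto
  have "\<forall>\<^sub>F N in sequentially. (real i * inverse (real N) - 1) * ((m - 1 + real i) * inverse (real N) + 1) / ?d = bfac m N i"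
    unfolding eventually_sequentially
  proof (rule exI[of _ 1], intro allI impI)
    fix N :: nat assume "N \<ge> 1"
    moreover note m0
    ultimately show "(real i * inverse (real N) - 1) * ((m - 1 + real i) * inverse (real N) + 1) / ?d = bfac m N i"
      by (simp add: bfac_def field_simps power2_eq_square)
  qed
  from Lim_transform_eventually[OF L this] show ?thesis by simp
qed

lemma bfac_zero: "bfac m N N = 0" by (simp add: bfac_def)

lemma bfac_bound:
  assumes "m \<ge> 1" "i < N"
  shows "\<bar>bfac m N i\<bar> \<le> 2 / (real i + 1)"
proof -
  have N1: "real N \<ge> 1" using assms by simp
  have iN: "real i < real N" using assms by simp
  have num: "\<bar>(real i - real N) * (real N + m - 1 + real i)\<bar> = (real N - real i) * (real N + m - 1 + real i)"
    using iN assms(1) by (simp add: abs_mult)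
  have key: "(real N)^2 * m - (real N - real i) * (real N + m - 1 + real i) = real N * (real N - 1) * (m - 1) + real i * (m - 1) + real i ^ 2"
    by (simp add: algebra_simps power2_eq_square)
  have nn: "real N * (real N - 1) * (m - 1) + real i * (m - 1) + real i ^ 2 \<ge> 0"
    using N1 assms(1) by (intro add_nonneg_nonneg mult_nonneg_nonneg) auto
  have le1: "(real N - real i) * (real N + m - 1 + real i) \<le> (real N)^2 * m" using key nn by linarith
  have le2: "(real N)^2 * ((real i + 1) * (m / 2)) \<le> (real N)^2 * ((real i + 1) * (real i + m / 2))"
    using assms(1) by (intro mult_left_mono) auto
  have pos: "0 < (real N)^2 * ((real i + 1) * (m / 2))" using N1 assms(1) by auto
  have "\<bar>bfac m N i\<bar> = (real N - real i) * (real N + m - 1 + real i) / ((real N)^2 * ((real i + 1) * (real i + m / 2)))"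
    unfolding bfac_def abs_divide num using assms(1) by simp
  also have "\<dots> \<le> ((real N)^2 * m) / ((real N)^2 * ((real i + 1) * (m / 2)))"
    by (rule frac_le[OF _ le1 pos le2]) (use N1 assms(1) in simp)
  also have "\<dots> = 2 / (real i + 1)"
  proof -
    have nz: "(real N)^2 * ((real i + 1) * (m / 2)) \<noteq> 0" using pos by linarith
    have "(real N)^2 * m = (2 / (real i + 1)) * ((real N)^2 * ((real i + 1) * (m / 2)))"
      by (simp add: field_simps)
    then show ?thesis using nz by (metis nonzero_mult_div_cancel_right)
  qed
  finally show ?thesis .
qed

lemma prod_two_fact: "(\<Prod>i<k. 2 / (real i + 1)) = 2 ^ k / fact k"
proof (induction k)
  case (Suc k)
  have "(\<Prod>i<Suc k. 2 / (real i + 1)) = (\<Prod>i<k. 2 / (real i + 1)) * (2 / (real k + 1))" by simp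
  also have "\<dots> = 2 ^ k / fact k * (2 / (real k + 1))" using Suc.IH by simp
  also have "\<dots> = 2 ^ Suc k / fact (Suc k)" by (simp add: field_simps)
  finally show ?case .
qed simp

lemma bN_bound:
  assumes "m \<ge> 1" "\<kappa> \<ge> 0"
  shows "\<bar>bN \<kappa> m N k\<bar> \<le> \<kappa> * 2 ^ k / fact k"
proof (cases "N < k")
  case True
  then have "bN \<kappa> m N k = 0" unfolding bN_def by (auto intro!: prod_zero bexI[of _ N] simp: bfac_zero)
  then show ?thesis using assms by simp
next
  case False
  have "\<bar>\<Prod>i<k. bfac m N i\<bar> \<le> (\<Prod>i<k. norm (bfac m N i))"
    using norm_prod_le[of "\<lambda>i. bfac m N i" "{..<k}"] by simp
  also have "\<dots> \<le> (\<Prod>i<k. 2 / (real i + 1))"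
    by (intro prod_mono) (use False bfac_bound[OF assms(1)] in auto)
  finally have "\<bar>\<Prod>i<k. bfac m N i\<bar> \<le> 2 ^ k / fact k" unfolding prod_two_fact .
  then have "\<kappa> * \<bar>\<Prod>i<k. bfac m N i\<bar> \<le> \<kappa> * (2 ^ k / fact k)" by (rule mult_left_mono[OF _ assms(2)])
  then show ?thesis unfolding bN_def abs_mult using assms(2) by simp
qed

lemma Hc_b:
  assumes "m \<ge> 1" "\<kappa> \<ge> 0"
  shows "(bN \<kappa> m, bL \<kappa> m) \<in> Hc"
  unfolding Hc_def
proof (intro CollectI case_prodI conjI allI exI[of _ "\<lambda>k. \<kappa> * 2 ^ k / fact k"])
  fix k
  show "(\<lambda>N. bN \<kappa> m N k) \<longlonglongrightarrow> bL \<kappa> m k"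
    unfolding bN_def bL_def using assms(1) by (intro tendsto_mult tendsto_const tendsto_prod bfac_lim) auto
next
  fix N k show "\<bar>bN \<kappa> m N k\<bar> \<le> \<kappa> * 2 ^ k / fact k" by (rule bN_bound[OF assms])
next
  fix R :: real
  show "summable (\<lambda>k. \<kappa> * 2 ^ k / fact k * R ^ k)"
    by (rule summable_fact_dom[of _ \<kappa> 2]) (use assms in simp)
qed

lemma bL_alt:
  assumes "m > 0"
  shows "bL \<kappa> m k = \<kappa> * (-1)^k / (fact k * pochhammer (m/2) k)"
proof -
  have "(\<Prod>i<k. -1 / ((real i + 1) * (real i + m / 2))) = (-1)^k / (fact k * pochhammer (m/2) k)"
  proof (induction k)
    case (Suc k)
    have p: "pochhammer (m/2) k > 0" using assms by (simp add: pochhammer_pos)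
    have f: "fact k > (0::real)" by simp
    have q: "real k + m / 2 > 0" using assms by simp
    have "(\<Prod>i<Suc k. -1 / ((real i + 1) * (real i + m / 2))) = (\<Prod>i<k. -1 / ((real i + 1) * (real i + m / 2))) * (-1 / ((real k + 1) * (real k + m / 2)))" by simp
    also have "\<dots> = (-1)^k / (fact k * pochhammer (m/2) k) * (-1 / ((real k + 1) * (real k + m / 2)))" using Suc.IH by simp
    also have "\<dots> = (-1)^Suc k / (((real k + 1) * fact k) * ((real k + m/2) * pochhammer (m/2) k))"
      using p f q by (simp add: field_simps)
    also have "\<dots> = (-1)^Suc k / (fact (Suc k) * pochhammer (m/2) (Suc k))"
      by (simp add: pochhammer_rec' algebra_simps)
    finally show ?case .
  qed simp
  then show ?thesis unfolding bL_def by simp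
qed

lemma aux1: "(a::real) * (b / g * S) = a * b * S / g" by simp
lemma aux2: "(1 / (p::real)) * S / g = S / (p * g)" by simp
lemma aux3: "0 < t \<Longrightarrow> (t::real) powr (- v) * (t / 2) powr v = 1 / 2 powr v"
  by (simp add: powr_minus powr_divide)

lemma bessel_pw:
  fixes m t \<kappa> :: real
  assumes m: "m \<ge> 1" and \<kappa>: "\<kappa> = 1 / (2 powr (m/2 - 1) * Gamma (m/2))" and t: "t \<ge> 0"
  shows "pw (bL \<kappa> m) (t^2/4) = besselJ_scaled (m/2 - 1) t"
proof (cases "t = 0")
  case True
  have "pw (bL \<kappa> m) (t^2/4) = bL \<kappa> m 0" using True unfolding pw_def by simp
  then show ?thesis using True \<kappa> by (simp add: besselJ_scaled_def bL_def)
next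
  case False
  then have t0: "t > 0" using t by simp
  define \<nu> where "\<nu> = m/2 - 1"
  define g where "g = Gamma (m/2)"
  have g0: "g > 0" unfolding g_def using m by simp
  define st where "st k = (-1)^k / (fact k * pochhammer (m/2) k) * (t^2/4)^k" for k
  have bL1: "bL 1 m k = (-1)^k / (fact k * pochhammer (m/2) k)" for k using bL_alt[of m 1 k] m by simp
  have sst: "summable st"
    using Hc_summable(2)[OF Hc_b[of m 1], of "t^2/4"] m unfolding st_def bL1 by simp
  have notint: "m/2 \<notin> \<int>\<^sub>\<le>\<^sub>0" using m by auto
  have tm: "(-1)^k / (fact k * Gamma (real k + \<nu> + 1)) * (t / 2) powr (2 * real k + \<nu>) = ((t/2) powr \<nu> / g) * st k" for k
  proof -
    have G: "Gamma (real k + \<nu> + 1) = pochhammer (m/2) k * g"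
      using pochhammer_Gamma[OF notint, of k] g0 unfolding g_def \<nu>_def by (simp add: field_simps add_ac)
    have P: "(t / 2) powr (2 * real k + \<nu>) = (t^2/4)^k * (t/2) powr \<nu>"
    proof -
      have "(t / 2) powr (2 * real k + \<nu>) = (t/2) powr (real (2*k)) * (t/2) powr \<nu>" by (simp add: powr_add)
      also have "(t/2) powr (real (2*k)) = (t/2)^(2*k)" using t0 powr_realpow[of "t/2" "2*k"] by simp
      also have "(t/2)^(2*k) = (t^2/4)^k" by (simp add: power_mult power_divide)
      finally show ?thesis .
    qed
    show ?thesis unfolding G P st_def using g0 by (simp add: field_simps)
  qed
  have "besselJ \<nu> t = (\<Sum>k. ((t/2) powr \<nu> / g) * st k)"
    unfolding besselJ_def tm ..
  also have "\<dots> = ((t/2) powr \<nu> / g) * suminf st" by (rule suminf_mult[OF sst])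
  finally have BJ: "besselJ \<nu> t = ((t/2) powr \<nu> / g) * suminf st" .
  have tt: "t powr (- \<nu>) * (t/2) powr \<nu> = 1 / 2 powr \<nu>"
    using t0 by (rule aux3)
  have "besselJ_scaled \<nu> t = t powr (- \<nu>) * besselJ \<nu> t" using False by (simp add: besselJ_scaled_def)
  also have "\<dots> = (t powr (- \<nu>) * (t/2) powr \<nu>) * suminf st / g" unfolding BJ by (rule aux1)
  also have "\<dots> = suminf st / (2 powr \<nu> * g)" unfolding tt by (rule aux2)
  finally have "besselJ_scaled \<nu> t = suminf st / (2 powr \<nu> * g)" .
  moreover have "pw (bL \<kappa> m) (t^2/4) = \<kappa> * suminf st"
  proof -
    have "pw (bL \<kappa> m) (t^2/4) = (\<Sum>k. \<kappa> * st k)"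
      unfolding pw_def st_def using bL_alt[of m \<kappa>] m by (simp add: mult.assoc)
    also have "\<dots> = \<kappa> * suminf st" by (rule suminf_mult[OF sst])
    finally show ?thesis .
  qed
  ultimately show ?thesis unfolding \<kappa> \<nu>_def g_def by simp
qed

lemma isometry_inner:
  assumes "linear L" "\<forall>y. norm (L y) = norm y"
  shows "L y \<bullet> L z = y \<bullet> z"
proof -
  have "L (y + z) = L y + L z" using assms(1) by (simp add: linear_add)
  then show ?thesis using assms(2) by (metis dot_norm)
qed

lemma chart_inner:
  fixes p0 :: "real^'k::finite" and L :: "real^'n::finite \<Rightarrow> real^'k"
  assumes "norm p0 = 1" "linear L" "\<forall>y. norm (L y) = norm y" "\<forall>y. inner (L y) p0 = 0"
  shows "geo_chart_inv p0 L y \<bullet> geo_chart_inv p0 L z = cos (norm y) * cos (norm z) + (sin (norm y) / norm y) * (sin (norm z) / norm z) * (y \<bullet> z)"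
proof -
  have pp: "p0 \<bullet> p0 = 1" using assms(1) by (metis norm_eq_1)
  have lp: "L y \<bullet> p0 = 0" "p0 \<bullet> L z = 0" using assms(4) by (auto simp: inner_commute)
  have ll: "L y \<bullet> L z = y \<bullet> z" by (rule isometry_inner[OF assms(2,3)])
  show ?thesis unfolding geo_chart_inv_def
    by (simp add: inner_add_left inner_add_right pp lp ll algebra_simps)
qed

lemma chart_norm:
  fixes p0 :: "real^'k::finite" and L :: "real^'n::finite \<Rightarrow> real^'k"
  assumes "norm p0 = 1" "linear L" "\<forall>y. norm (L y) = norm y" "\<forall>y. inner (L y) p0 = 0"
  shows "norm (geo_chart_inv p0 L y) = 1"
proof -
  have "geo_chart_inv p0 L y \<bullet> geo_chart_inv p0 L y = 1"
  proof (cases "y = 0")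
    case True then show ?thesis using chart_inner[OF assms, of y y] by simp
  next
    case False
    have "(sin (norm y) / norm y) * (sin (norm y) / norm y) * (y \<bullet> y) = (sin (norm y))^2"
      using False by (simp add: power2_norm_eq_inner[symmetric] field_simps power2_eq_square)
    then show ?thesis using chart_inner[OF assms, of y y] by (simp add: power2_eq_square[symmetric])
  qed
  then show ?thesis by (metis norm_eq_1)
qed

lemma sinc_pw:
  fixes y z :: "real^'n::finite"
  shows "(sin (norm y) / norm y) * (sin (norm z) / norm z) * (y \<bullet> z) = pw s1 ((norm y)^2) * pw s1 ((norm z)^2) * (y \<bullet> z)"
proof (cases "y = 0 \<or> z = 0")
  case True then show ?thesis by auto
next
  case False
  then show ?thesis using sin_S1[of "norm y"] sin_S1[of "norm z"] by simp
qed

definition nx :: "real^'n::finite \<Rightarrow> real" where "nx x = (\<Sum>i\<in>UNIV. x$i * x$i)"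
definition ipx :: "real^'n::finite \<Rightarrow> real^'n \<Rightarrow> real" where "ipx xj x = (\<Sum>i\<in>UNIV. x$i * xj$i)"

definition Fsig :: "real^'n::finite \<Rightarrow> nat \<Rightarrow> real^'n \<Rightarrow> real" where
  "Fsig xj N x = (1/2) * (nx x * pw (c1N N) (nx x) + (nx xj * pw (c1N N) (nx xj) +
     ((-1) * (1 / (real N)^2) * (nx x * nx xj * (pw (c1N N) (nx x) * pw (c1N N) (nx xj))) +
      (-1) * (pw (sN N) (nx x) * pw (sN N) (nx xj) * ipx xj x))))"
definition fsig :: "real^'n::finite \<Rightarrow> real^'n \<Rightarrow> real" where
  "fsig xj x = (1/2) * (nx x * pw c1L (nx x) + (nx xj * pw c1L (nx xj) +
     ((-1) * 0 * (nx x * nx xj * (pw c1L (nx x) * pw c1L (nx xj))) +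
      (-1) * (pw sL (nx x) * pw sL (nx xj) * ipx xj x))))"

lemma A_sum: "finite I \<Longrightarrow> (\<And>i. i \<in> I \<Longrightarrow> (F i, f i) \<in> Aset) \<Longrightarrow> (\<lambda>N x. \<Sum>i\<in>I. F i N x, \<lambda>x. \<Sum>i\<in>I. f i x) \<in> Aset"
proof (induction I rule: finite_induct)
  case empty then show ?case using Aconst0[of 0] by simp
next
  case (insert a I) then show ?case using Aset.Aadd[of "F a" "f a" "\<lambda>N x. \<Sum>i\<in>I. F i N x" "\<lambda>x. \<Sum>i\<in>I. f i x"] by simp
qed

lemma nx_A: "(\<lambda>N x. nx x, nx) \<in> Aset"
proof -
  have "(\<lambda>N x. \<Sum>i\<in>UNIV. x$i * x$i, \<lambda>x. \<Sum>i\<in>UNIV. x$i * x$i) \<in> Aset"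
    by (intro A_sum Aset.Amult Aset.Acoord) auto
  then show ?thesis unfolding nx_def[abs_def] by simp
qed

lemma ipx_A: "(\<lambda>N x. ipx xj x, ipx xj) \<in> Aset"
proof -
  have "(\<lambda>N x. \<Sum>i\<in>UNIV. x$i * xj$i, \<lambda>x. \<Sum>i\<in>UNIV. x$i * xj$i) \<in> Aset"
    by (intro A_sum Aset.Amult Aset.Acoord Aconst0) auto
  then show ?thesis unfolding ipx_def[abs_def] by simp
qed

lemma inv_sq_lim0: "(\<lambda>N. 1 / (real N)^2) \<longlonglongrightarrow> 0"
  using inv_sq_lim[of 1] by simp

lemma sig_A: "(Fsig xj, fsig xj) \<in> Aset"
proof -
  have c1: "(\<lambda>N x. pw (c1N N) (nx x), \<lambda>x. pw c1L (nx x)) \<in> Aset" by (rule Aset.Acomp[OF nx_A Hc_c1])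
  have c2: "(\<lambda>N x. pw (c1N N) (nx xj), \<lambda>x. pw c1L (nx xj)) \<in> Aset" by (rule Aset.Acomp[OF Aconst0 Hc_c1])
  have s1': "(\<lambda>N x. pw (sN N) (nx x), \<lambda>x. pw sL (nx x)) \<in> Aset" by (rule Aset.Acomp[OF nx_A Hc_s1])
  have s2: "(\<lambda>N x. pw (sN N) (nx xj), \<lambda>x. pw sL (nx xj)) \<in> Aset" by (rule Aset.Acomp[OF Aconst0 Hc_s1])
  have k: "(\<lambda>N x. 1 / (real N)^2, \<lambda>x. 0) \<in> Aset" by (rule Aset.Aconst[OF inv_sq_lim0])
  have "(\<lambda>N x. (1/2) * (nx x * pw (c1N N) (nx x) + (nx xj * pw (c1N N) (nx xj) +
     ((-1) * (1 / (real N)^2) * (nx x * nx xj * (pw (c1N N) (nx x) * pw (c1N N) (nx xj))) +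
      (-1) * (pw (sN N) (nx x) * pw (sN N) (nx xj) * ipx xj x)))),
     \<lambda>x. (1/2) * (nx x * pw c1L (nx x) + (nx xj * pw c1L (nx xj) +
     ((-1) * 0 * (nx x * nx xj * (pw c1L (nx x) * pw c1L (nx xj))) +
      (-1) * (pw sL (nx x) * pw sL (nx xj) * ipx xj x))))) \<in> Aset"
    by (intro Aset.Amult Aset.Aadd Aconst0 c1 c2 s1' s2 k nx_A ipx_A)
  then show ?thesis unfolding Fsig_def[abs_def] fsig_def[abs_def] .
qed

lemma fsig_eq: "fsig xj x = (norm (x - xj))^2 / 4"
proof -
  have "(norm (x - xj))^2 = nx x - 2 * ipx xj x + nx xj"
    unfolding power2_norm_eq_inner nx_def ipx_def inner_diff_left inner_diff_right inner_sum_vec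
    by (simp add: algebra_simps sum_subtractf sum.distrib sum_distrib_left)
  then show ?thesis unfolding fsig_def pw_c1L pw_sL by (simp add: field_simps)
qed

lemma alg1:
  fixes n t a b p q s1v s2v i :: real
  assumes "n * t = 1"
  shows "n * ((1 - ((1 - t * a * p) * (1 - t * b * q) + s1v * s2v * (t * i))) / 2)
       = (1/2) * (a * p + (b * q + ((-1) * t * (a * b * (p * q)) + (-1) * (s1v * s2v * i))))"
proof -
  have "n * ((1 - ((1 - t * a * p) * (1 - t * b * q) + s1v * s2v * (t * i))) / 2)
      = (n * t) * ((a * p + (b * q + ((-1) * t * (a * b * (p * q)) + (-1) * (s1v * s2v * i)))) / 2)"
    by (simp add: algebra_simps)
  then show ?thesis using assms by simp
qed

lemma sig_identity:
  fixes p0 :: "real^'k::finite" and L :: "real^'n::finite \<Rightarrow> real^'k" and x xj :: "real^'n"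
  assumes ch: "norm p0 = 1" "linear L" "\<forall>y. norm (L y) = norm y" "\<forall>y. inner (L y) p0 = 0"
    and N: "N \<ge> 1"
  shows "(real N)^2 * ((1 - geo_chart_inv p0 L (x /\<^sub>R real N) \<bullet> geo_chart_inv p0 L (xj /\<^sub>R real N)) / 2) = Fsig xj N x"
proof -
  define t where "t = 1 / (real N)^2"
  have N0: "real N \<noteq> 0" using N by simp
  define u where "u = t * nx x"
  define v where "v = t * nx xj"
  have nrm: "(norm (w /\<^sub>R real N))^2 = t * nx w" for w :: "real^'n"
    unfolding power2_norm_eq_inner t_def nx_def inner_sum_vec[symmetric]
    by (simp add: inner_scaleR_left inner_scaleR_right power2_eq_square divide_inverse)
  have yz: "(x /\<^sub>R real N) \<bullet> (xj /\<^sub>R real N) = t * ipx xj x"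
    unfolding t_def ipx_def inner_sum_vec[symmetric]
    by (simp add: inner_scaleR_left inner_scaleR_right power2_eq_square divide_inverse)
  have pc: "pw (c1N N) w = pw c1 (t * w)" for w unfolding c1N_def t_def by (rule pw_rescale)
  have ps: "pw (sN N) w = pw s1 (t * w)" for w unfolding sN_def t_def by (rule pw_rescale)
  have "geo_chart_inv p0 L (x /\<^sub>R real N) \<bullet> geo_chart_inv p0 L (xj /\<^sub>R real N)
      = (1 - u * pw c1 u) * (1 - v * pw c1 v) + pw s1 u * pw s1 v * (t * ipx xj x)"
    unfolding chart_inner[OF ch] sinc_pw unfolding cos_C1[of "norm (x /\<^sub>R real N)"] cos_C1[of "norm (xj /\<^sub>R real N)"] nrm yz u_def v_def ..
  moreover have "Fsig xj N x = (1/2) * (nx x * pw c1 u + (nx xj * pw c1 v +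
     ((-1) * t * (nx x * nx xj * (pw c1 u * pw c1 v)) + (-1) * (pw s1 u * pw s1 v * ipx xj x))))"
    unfolding Fsig_def pc ps u_def v_def t_def ..
  moreover have "(real N)^2 * t = 1" unfolding t_def using N0 by simp
  ultimately show ?thesis unfolding u_def v_def by (simp only: alg1)
qed

lemma card_opt: "CARD('a::finite option) = Suc CARD('a)"
proof -
  have "(UNIV :: 'a option set) = insert None (Some ` UNIV)" by (rule UNIV_option_conv)
  moreover have "card (insert None (Some ` (UNIV :: 'a set))) = Suc CARD('a)"
    by (subst card_insert_disjoint) (auto simp: card_image)
  ultimately show ?thesis by simp
qed

lemma chart_zero: "linear L \<Longrightarrow> geo_chart_inv p0 L 0 = p0"
  by (simp add: geo_chart_inv_def linear_0)

lemma UNIV_open: "open (UNIV :: (real^'n::finite) set)" by simp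

lemma lin_diff:
  fixes f F :: "real^'n::finite \<Rightarrow> real"
  assumes "smooth_in UNIV f" "smooth_in UNIV F"
  shows "smooth_in UNIV (\<lambda>x. f x - F x)" "pderivs is (\<lambda>x. f x - F x) x = pderivs is f x - pderivs is F x"
proof -
  have e: "(\<lambda>x. f x - F x) = (\<lambda>x. 1 *\<^sub>R f x + (-1) *\<^sub>R F x)" by auto
  show "smooth_in UNIV (\<lambda>x. f x - F x)" unfolding e by (rule smooth_in_lin[OF UNIV_open assms])
  show "pderivs is (\<lambda>x. f x - F x) x = pderivs is f x - pderivs is F x"
    unfolding e using pderivs_lin[OF UNIV_open assms, of x "is" 1 "-1"] by simp
qed

lemma lin_scal:
  fixes F :: "real^'n::finite \<Rightarrow> real"
  assumes "smooth_in UNIV F"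
  shows "smooth_in UNIV (\<lambda>x. e * F x)" "pderivs is (\<lambda>x. e * F x) x = e * pderivs is F x"
proof -
  have e: "(\<lambda>x. e * F x) = (\<lambda>x. e *\<^sub>R F x + 0 *\<^sub>R F x)" by auto
  show "smooth_in UNIV (\<lambda>x. e * F x)" unfolding e by (rule smooth_in_lin[OF UNIV_open assms assms])
  show "pderivs is (\<lambda>x. e * F x) x = e * pderivs is F x"
    unfolding e using pderivs_lin[OF UNIV_open assms assms, of x "is" e 0] by simp
qed

lemma comb_pderivs:
  fixes D :: "nat \<Rightarrow> real^'n::finite \<Rightarrow> real" and E :: "real^'n \<Rightarrow> real" and c :: "nat \<Rightarrow> 'b::real_normed_vector" and v :: 'b
  assumes J: "finite J" and D: "\<And>j. j \<in> J \<Longrightarrow> smooth_in UNIV (D j)" and E: "smooth_in UNIV E"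
  shows "pderivs is (\<lambda>x. (\<Sum>j\<in>J. D j x *\<^sub>R c j) + E x *\<^sub>R v) x = (\<Sum>j\<in>J. pderivs is (D j) x *\<^sub>R c j) + pderivs is E x *\<^sub>R v"
proof -
  have sD: "smooth_in UNIV (\<lambda>x. D j x *\<^sub>R c j)" if "j \<in> J" for j by (rule smooth_in_scale_vec[OF UNIV_open D[OF that]])
  have S: "smooth_in UNIV (\<lambda>x. \<Sum>j\<in>J. D j x *\<^sub>R c j) \<and> (\<forall>x\<in>UNIV. pderivs is (\<lambda>x. \<Sum>j\<in>J. D j x *\<^sub>R c j) x = (\<Sum>j\<in>J. pderivs is (\<lambda>x. D j x *\<^sub>R c j) x))"
    by (rule pderivs_sum[OF UNIV_open J sD])
  have sE: "smooth_in UNIV (\<lambda>x. E x *\<^sub>R v)" by (rule smooth_in_scale_vec[OF UNIV_open E])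
  have e: "(\<lambda>x. (\<Sum>j\<in>J. D j x *\<^sub>R c j) + E x *\<^sub>R v) = (\<lambda>x. 1 *\<^sub>R (\<Sum>j\<in>J. D j x *\<^sub>R c j) + 1 *\<^sub>R (E x *\<^sub>R v))" by simp
  have "pderivs is (\<lambda>x. (\<Sum>j\<in>J. D j x *\<^sub>R c j) + E x *\<^sub>R v) x
      = pderivs is (\<lambda>x. \<Sum>j\<in>J. D j x *\<^sub>R c j) x + pderivs is (\<lambda>x. E x *\<^sub>R v) x"
    unfolding e using pderivs_lin[OF UNIV_open conjunct1[OF S] sE, of x "is" 1 1] by simp
  also have "\<dots> = (\<Sum>j\<in>J. pderivs is (D j) x *\<^sub>R c j) + pderivs is E x *\<^sub>R v"
  proof -
    have "(\<Sum>j\<in>J. pderivs is (\<lambda>x. D j x *\<^sub>R c j) x) = (\<Sum>j\<in>J. pderivs is (D j) x *\<^sub>R c j)"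
      by (intro sum.cong refl pderivs_scale_vec[OF UNIV_open D]) auto
    then show ?thesis using S pderivs_scale_vec[OF UNIV_open E, of x "is" v] by simp
  qed
  finally show ?thesis .
qed

lemma Cr_bound_generic:
  fixes g :: "real^'n::finite \<Rightarrow> 'b::real_normed_vector"
  assumes "\<And>is x. length is \<le> r \<Longrightarrow> x \<in> ball 0 1 \<Longrightarrow> norm (pderivs is g x) \<le> B" "B < \<delta>"
  shows "bdd_above (Cr_values r (ball 0 1) g) \<and> Cr_norm r (ball 0 1) g < \<delta>"
proof -
  have le: "\<forall>y\<in>Cr_values r (ball 0 1) g. y \<le> B" unfolding Cr_values_def using assms(1) by auto
  have ne: "Cr_values r (ball 0 1) g \<noteq> {}"
  proof -
    have "norm (pderivs [] g 0) \<in> Cr_values r (ball 0 1) g" unfolding Cr_values_def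
      by (rule CollectI, rule exI[of _ "[]"], rule exI[of _ 0]) simp
    then show ?thesis by blast
  qed
  have "bdd_above (Cr_values r (ball 0 1) g)" using le by (auto intro: bdd_aboveI)
  moreover have "Cr_norm r (ball 0 1) g \<le> B" unfolding Cr_norm_def using le ne by (intro cSup_least) auto
  ultimately show ?thesis using assms(2) by simp
qed

theorem proposition2p3:
  fixes p0 :: "real^('n::finite option)"
    and L :: "real^'n \<Rightarrow> real^('n option)"
    and c :: "nat \<Rightarrow> real^'m::finite"
    and xp :: "nat \<Rightarrow> real^'n"
    and N' r :: nat and \<delta> :: real
  assumes "CARD('n) \<ge> 2"
    and "norm p0 = 1"
    and "linear L" and "\<forall>y. norm (L y) = norm y" and "\<forall>y. inner (L y) p0 = 0"
    and "r > 0"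
    and "\<delta> > 0"
  shows "\<forall>\<^sub>F N in sequentially. \<exists>\<psi> :: real^('n option) \<Rightarrow> real^'m.
           sphere_eigenfunction \<psi> (real N * (real N + real CARD('n) - 1)) \<and>
           (let \<phi> = (\<lambda>x. \<Sum>j\<in>{1..N'}. besselJ_scaled (real CARD('n) / 2 - 1) (norm (x - xp j)) *\<^sub>R c j);
                g = (\<lambda>x. \<phi> x - \<psi> (geo_chart_inv p0 L (x /\<^sub>R real N)))
            in bdd_above (Cr_values r (ball 0 1) g) \<and> Cr_norm r (ball 0 1) g < \<delta>)"
proof -
  note ch = assms(2-5)
  define m where "m = real CARD('n)"
  have m2: "m \<ge> 2" using assms(1) unfolding m_def by simp
  define \<kappa> where "\<kappa> = 1 / (2 powr (m/2 - 1) * Gamma (m/2))"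
  have \<kappa>0: "\<kappa> > 0" unfolding \<kappa>_def using m2 by simp
  define U where "U = (\<lambda>j N x. pw (bN \<kappa> m N) (Fsig (xp j) N x))"
  define ul where "ul = (\<lambda>j x. pw (bL \<kappa> m) (fsig (xp j) x))"
  define U0 where "U0 = (\<lambda>N x. pw (bN \<kappa> m N) (Fsig (0::real^'n) N x))"
  define ul0 where "ul0 = (\<lambda>x. pw (bL \<kappa> m) (fsig (0::real^'n) x))"
  have HB: "(bN \<kappa> m, bL \<kappa> m) \<in> Hc" by (rule Hc_b) (use m2 \<kappa>0 in auto)
  have UA: "(U j, ul j) \<in> Aset" for j unfolding U_def ul_def by (rule Aset.Acomp[OF sig_A HB])
  have U0A: "(U0, ul0) \<in> Aset" unfolding U0_def ul0_def by (rule Aset.Acomp[OF sig_A HB])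
  have ul_eq: "ul j x = besselJ_scaled (real CARD('n) / 2 - 1) (norm (x - xp j))" for j x
    unfolding ul_def fsig_eq using bessel_pw[of m \<kappa> "norm (x - xp j)"] m2 \<kappa>_def m_def by simp
  define K where "K = cball (0::real^'n) 1"
  have K: "compact K" unfolding K_def by simp
  define IS where "IS = {is :: 'n list. set is \<subseteq> UNIV \<and> length is \<le> r}"
  have IS: "finite IS" unfolding IS_def by (rule finite_lists_length_le) simp
  have "\<forall>is. \<exists>M. \<forall>x\<in>K. \<bar>pderivs is ul0 x\<bar> \<le> M" using A_conv(2)[OF U0A K] by blast
  then obtain Mf where Mf: "\<forall>is. \<forall>x\<in>K. \<bar>pderivs is ul0 x\<bar> \<le> Mf is" by metis
  define M0 where "M0 = (\<Sum>is\<in>IS. \<bar>Mf is\<bar>)"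
  have M0pos: "M0 \<ge> 0" unfolding M0_def by (simp add: sum_nonneg)
  have M0: "\<bar>pderivs is ul0 x\<bar> \<le> M0" if "is \<in> IS" "x \<in> K" for "is" x
  proof -
    have "\<bar>Mf is\<bar> \<le> M0" unfolding M0_def by (rule member_le_sum[OF that(1) _ IS]) simp
    moreover have "\<bar>pderivs is ul0 x\<bar> \<le> Mf is" using Mf that(2) by blast
    ultimately show ?thesis by linarith
  qed
  define v where "v = (axis undefined 1 :: real^'m)"
  have v: "norm v = 1" by (simp add: v_def)
  define \<epsilon> where "\<epsilon> = \<delta> / (4 * (M0 + 1))"
  have \<epsilon>: "\<epsilon> > 0" unfolding \<epsilon>_def using assms(7) M0pos by simp
  have \<epsilon>M: "\<epsilon> * M0 \<le> \<delta> / 4"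
  proof -
    have "\<epsilon> * M0 \<le> \<epsilon> * (M0 + 1)" using \<epsilon> by simp
    also have "\<dots> = \<delta> / 4" unfolding \<epsilon>_def using M0pos by (simp add: field_simps)
    finally show ?thesis .
  qed
  define Cs where "Cs = (\<Sum>j\<in>{1..N'}. norm (c j)) + \<epsilon> + 1"
  have Cs: "Cs > 0" unfolding Cs_def using \<epsilon> by (simp add: add_nonneg_pos sum_nonneg)
  define \<eta> where "\<eta> = \<delta> / (4 * Cs)"
  have \<eta>: "\<eta> > 0" unfolding \<eta>_def using Cs assms(7) by simp
  have EV1: "\<forall>\<^sub>F N in sequentially. \<forall>is\<in>IS. \<forall>j\<in>{1..N'}. \<forall>x\<in>K. \<bar>pderivs is (U j N) x - pderivs is (ul j) x\<bar> < \<eta>"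
    by (intro eventually_ball_finite IS finite_atLeastAtMost ballI A_conv(1)[OF UA K \<eta>])
  have EV2: "\<forall>\<^sub>F N in sequentially. \<forall>is\<in>IS. \<forall>x\<in>K. \<bar>pderivs is (U0 N) x - pderivs is ul0 x\<bar> < \<eta>"
    by (intro eventually_ball_finite IS ballI A_conv(1)[OF U0A K \<eta>])
  have EV3: "\<forall>\<^sub>F N in sequentially. N \<ge> 1" by (rule eventually_ge_at_top)
  show ?thesis
  proof (rule eventually_mono[OF eventually_conj[OF EV1 eventually_conj[OF EV2 EV3]]])
    fix N assume H: "(\<forall>is\<in>IS. \<forall>j\<in>{1..N'}. \<forall>x\<in>K. \<bar>pderivs is (U j N) x - pderivs is (ul j) x\<bar> < \<eta>) \<and>
       (\<forall>is\<in>IS. \<forall>x\<in>K. \<bar>pderivs is (U0 N) x - pderivs is ul0 x\<bar> < \<eta>) \<and> N \<ge> 1"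
    then have N1: "N \<ge> 1" by blast
    have m0: "m > 0" using m2 by simp
    define a where "a = acoef m N"
    define Q where "Q = (\<lambda>w. case w of None \<Rightarrow> p0 | Some j \<Rightarrow> geo_chart_inv p0 L (xp j /\<^sub>R real N))"
    define CC where "CC = (\<lambda>e w. case w of None \<Rightarrow> (e * \<kappa>) *\<^sub>R v | Some j \<Rightarrow> \<kappa> *\<^sub>R c j)"
    define JJ where "JJ = insert None (Some ` {1..N'})"
    define \<psi> where "\<psi> = (\<lambda>e p. \<Sum>w\<in>JJ. pw a ((1 - p \<bullet> Q w) / 2) *\<^sub>R CC e w)"
    have JJf: "finite JJ" unfolding JJ_def by simp
    have Qn: "\<forall>w\<in>JJ. norm (Q w) = 1" unfolding Q_def using chart_norm[OF ch] assms(2) by (auto split: option.splits)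
    have mopt: "m = real CARD('n option) - 1" unfolding m_def card_opt by simp
    have psplit: "\<psi> e p = pw a ((1 - p \<bullet> p0) / 2) *\<^sub>R ((e * \<kappa>) *\<^sub>R v) +
        (\<Sum>j\<in>{1..N'}. pw a ((1 - p \<bullet> geo_chart_inv p0 L (xp j /\<^sub>R real N)) / 2) *\<^sub>R (\<kappa> *\<^sub>R c j))" for e p
      unfolding \<psi>_def JJ_def by (simp add: sum.reindex inj_on_def Q_def CC_def)
    have p0s: "p0 \<in> sphere 0 1" using assms(2) by simp
    have eig: "sphere_eigenfunction (\<psi> e) (real N * (real N + real CARD('n) - 1))" if nz: "\<psi> e p0 \<noteq> 0" for e
    proof -
      note E = eigen_general[OF JJf Qn mopt m0, where N=N and C="CC e"]
      show ?thesis unfolding sphere_eigenfunction_def Let_def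
      proof (intro conjI)
        show "smooth_on_open (- {0}) (\<lambda>x. \<psi> e (x /\<^sub>R norm x))" using E unfolding \<psi>_def a_def by simp
        show "\<forall>x\<in>sphere 0 1. laplacian (\<lambda>x. \<psi> e (x /\<^sub>R norm x)) x = - (real N * (real N + real CARD('n) - 1)) *\<^sub>R \<psi> e (x /\<^sub>R norm x)"
          using E unfolding \<psi>_def a_def m_def by simp
        show "\<exists>x\<in>sphere 0 1. \<psi> e x \<noteq> 0" using nz p0s by blast
      qed
    qed
    have p0p0: "p0 \<bullet> p0 = 1" using assms(2) by (metis norm_eq_1)
    have a0: "pw a 0 = 1" unfolding pw_def a_def by simp
    define A0 where "A0 = (\<Sum>j\<in>{1..N'}. pw a ((1 - p0 \<bullet> geo_chart_inv p0 L (xp j /\<^sub>R real N)) / 2) *\<^sub>R (\<kappa> *\<^sub>R c j))"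
    have psi_p0: "\<psi> e p0 = (e * \<kappa>) *\<^sub>R v + A0" for e unfolding psplit A0_def p0p0 using a0 by simp
    have nzc: "\<psi> \<epsilon> p0 \<noteq> 0 \<or> \<psi> (\<epsilon>/2) p0 \<noteq> 0"
    proof (rule ccontr)
      assume "\<not> (\<psi> \<epsilon> p0 \<noteq> 0 \<or> \<psi> (\<epsilon>/2) p0 \<noteq> 0)"
      then have "(\<epsilon> * \<kappa>) *\<^sub>R v + A0 = 0" "(\<epsilon> / 2 * \<kappa>) *\<^sub>R v + A0 = 0" unfolding psi_p0 by auto
      then have d: "((\<epsilon> * \<kappa>) *\<^sub>R v + A0) - ((\<epsilon> / 2 * \<kappa>) *\<^sub>R v + A0) = 0" by simp
      have "(\<epsilon> * \<kappa> - \<epsilon> / 2 * \<kappa>) *\<^sub>R v = ((\<epsilon> * \<kappa>) *\<^sub>R v + A0) - ((\<epsilon> / 2 * \<kappa>) *\<^sub>R v + A0)"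
        by (simp only: scaleR_diff_left add_diff_add diff_self add_0_right)
      then have "(\<epsilon> * \<kappa> - \<epsilon> / 2 * \<kappa>) *\<^sub>R v = 0" using d by simp
      moreover have "\<epsilon> * \<kappa> - \<epsilon> / 2 * \<kappa> \<noteq> 0" using \<epsilon> \<kappa>0 by simp
      moreover have "v \<noteq> 0" using v by auto
      ultimately show False by simp
    qed
    have cj: "\<kappa> * pw a ((1 - geo_chart_inv p0 L (x /\<^sub>R real N) \<bullet> q) / 2) = pw (bN \<kappa> m N) (Fsig xj N x)"
      if "q = geo_chart_inv p0 L (xj /\<^sub>R real N)" for xj q x
      using bN_rel[OF N1 m0, of \<kappa>] sig_identity[OF ch N1, of x xj] that unfolding a_def by simp
    have c0: "p0 = geo_chart_inv p0 L ((0::real^'n) /\<^sub>R real N)" using chart_zero[OF assms(3)] by simp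
    have est: "let \<phi> = (\<lambda>x. \<Sum>j\<in>{1..N'}. besselJ_scaled (real CARD('n) / 2 - 1) (norm (x - xp j)) *\<^sub>R c j);
                g = (\<lambda>x. \<phi> x - \<psi> e (geo_chart_inv p0 L (x /\<^sub>R real N)))
            in bdd_above (Cr_values r (ball 0 1) g) \<and> Cr_norm r (ball 0 1) g < \<delta>" if e0: "0 < e" "e \<le> \<epsilon>" for e
    proof -
      have chartU: "\<psi> e (geo_chart_inv p0 L (x /\<^sub>R real N)) = (\<Sum>j\<in>{1..N'}. U j N x *\<^sub>R c j) + (e * U0 N x) *\<^sub>R v" for x
      proof -
        have t0: "pw a ((1 - geo_chart_inv p0 L (x /\<^sub>R real N) \<bullet> p0) / 2) *\<^sub>R ((e * \<kappa>) *\<^sub>R v) = (e * U0 N x) *\<^sub>R v"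
          using cj[where x=x, OF c0] unfolding U0_def by (simp add: mult_ac)
        have tj: "pw a ((1 - geo_chart_inv p0 L (x /\<^sub>R real N) \<bullet> geo_chart_inv p0 L (xp j /\<^sub>R real N)) / 2) *\<^sub>R (\<kappa> *\<^sub>R c j) = U j N x *\<^sub>R c j" for j
          using cj[where xj="xp j" and x=x, OF refl] unfolding U_def by (simp add: mult_ac)
        show ?thesis unfolding psplit t0 tj by simp
      qed
      define D where "D = (\<lambda>j x. ul j x - U j N x)"
      define E where "E = (\<lambda>x. (- e) * U0 N x)"
      have gG: "(\<lambda>x. (\<Sum>j\<in>{1..N'}. besselJ_scaled (real CARD('n) / 2 - 1) (norm (x - xp j)) *\<^sub>R c j) - \<psi> e (geo_chart_inv p0 L (x /\<^sub>R real N)))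
          = (\<lambda>x. (\<Sum>j\<in>{1..N'}. D j x *\<^sub>R c j) + E x *\<^sub>R v)"
      proof
        fix x
        show "(\<Sum>j\<in>{1..N'}. besselJ_scaled (real CARD('n) / 2 - 1) (norm (x - xp j)) *\<^sub>R c j) - \<psi> e (geo_chart_inv p0 L (x /\<^sub>R real N))
          = (\<Sum>j\<in>{1..N'}. D j x *\<^sub>R c j) + E x *\<^sub>R v"
          unfolding chartU ul_eq[symmetric] D_def E_def by (simp add: sum_subtractf scaleR_diff_left)
      qed
      have sD: "smooth_in UNIV (D j)" for j unfolding D_def by (rule lin_diff(1)[OF A_smooth(2)[OF UA] A_smooth(1)[OF UA]])
      have sE: "smooth_in UNIV E" unfolding E_def by (rule lin_scal(1)[OF A_smooth(1)[OF U0A]])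
      have pdD: "pderivs is (D j) x = pderivs is (ul j) x - pderivs is (U j N) x" for "is" j x
        unfolding D_def by (rule lin_diff(2)[OF A_smooth(2)[OF UA] A_smooth(1)[OF UA]])
      have pdE: "pderivs is E x = (- e) * pderivs is (U0 N) x" for "is" x
        unfolding E_def by (rule lin_scal(2)[OF A_smooth(1)[OF U0A]])
      have bound: "norm (pderivs is (\<lambda>x. (\<Sum>j\<in>{1..N'}. D j x *\<^sub>R c j) + E x *\<^sub>R v) x) \<le> \<delta> / 2"
        if len: "length is \<le> r" and xb: "x \<in> ball 0 1" for "is" x
      proof -
        have isI: "is \<in> IS" unfolding IS_def using len by simp
        have xK: "x \<in> K" unfolding K_def using xb by simp
        have Dj: "\<bar>pderivs is (D j) x\<bar> \<le> \<eta>" if "j \<in> {1..N'}" for j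
          using H isI xK that unfolding pdD by (force simp: abs_minus_commute)
        have U0b: "\<bar>pderivs is (U0 N) x\<bar> \<le> M0 + \<eta>"
        proof -
          have "\<bar>pderivs is (U0 N) x - pderivs is ul0 x\<bar> < \<eta>" using H isI xK by blast
          moreover have "\<bar>pderivs is ul0 x\<bar> \<le> M0" by (rule M0[OF isI xK])
          ultimately show ?thesis by linarith
        qed
        have "norm (pderivs is (\<lambda>x. (\<Sum>j\<in>{1..N'}. D j x *\<^sub>R c j) + E x *\<^sub>R v) x)
            = norm ((\<Sum>j\<in>{1..N'}. pderivs is (D j) x *\<^sub>R c j) + pderivs is E x *\<^sub>R v)"
          by (simp only: comb_pderivs[OF finite_atLeastAtMost sD sE])
        also have "\<dots> \<le> (\<Sum>j\<in>{1..N'}. norm (pderivs is (D j) x *\<^sub>R c j)) + norm (pderivs is E x *\<^sub>R v)"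
          by (rule order_trans[OF norm_triangle_ineq add_right_mono[OF norm_sum]])
        also have "\<dots> \<le> (\<Sum>j\<in>{1..N'}. \<eta> * norm (c j)) + e * (M0 + \<eta>)"
        proof (rule add_mono)
          show "(\<Sum>j\<in>{1..N'}. norm (pderivs is (D j) x *\<^sub>R c j)) \<le> (\<Sum>j\<in>{1..N'}. \<eta> * norm (c j))"
            using Dj by (intro sum_mono) (simp add: mult_right_mono)
          have "norm (pderivs is E x *\<^sub>R v) = e * \<bar>pderivs is (U0 N) x\<bar>" using v e0 unfolding pdE by (simp add: abs_mult)
          also have "\<dots> \<le> e * (M0 + \<eta>)" using U0b e0 by (simp add: mult_left_mono)
          finally show "norm (pderivs is E x *\<^sub>R v) \<le> e * (M0 + \<eta>)" .
        qed
        also have "\<dots> \<le> \<eta> * (\<Sum>j\<in>{1..N'}. norm (c j)) + (\<epsilon> * M0 + \<epsilon> * \<eta>)"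
        proof -
          have "e * (M0 + \<eta>) \<le> \<epsilon> * (M0 + \<eta>)" using e0 M0pos \<eta> by (intro mult_right_mono) auto
          then show ?thesis by (simp add: sum_distrib_left algebra_simps)
        qed
        also have "\<dots> \<le> \<eta> * Cs + \<delta> / 4"
        proof -
          have "\<eta> * (\<Sum>j\<in>{1..N'}. norm (c j)) + \<epsilon> * \<eta> \<le> \<eta> * Cs"
            unfolding Cs_def using \<eta> by (simp add: algebra_simps)
          then show ?thesis using \<epsilon>M by linarith
        qed
        also have "\<eta> * Cs = \<delta> / 4" unfolding \<eta>_def using Cs by simp
        finally show ?thesis by simp
      qed
      show ?thesis unfolding Let_def gG
        by (rule Cr_bound_generic[OF bound]) (use assms(7) in auto)
    qed
    from nzc obtain e where e: "e = \<epsilon> \<or> e = \<epsilon> / 2" "\<psi> e p0 \<noteq> 0" by blast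
    have e0: "0 < e" "e \<le> \<epsilon>" using e(1) \<epsilon> by auto
    show "\<exists>\<psi> :: real^('n option) \<Rightarrow> real^'m.
           sphere_eigenfunction \<psi> (real N * (real N + real CARD('n) - 1)) \<and>
           (let \<phi> = (\<lambda>x. \<Sum>j\<in>{1..N'}. besselJ_scaled (real CARD('n) / 2 - 1) (norm (x - xp j)) *\<^sub>R c j);
                g = (\<lambda>x. \<phi> x - \<psi> (geo_chart_inv p0 L (x /\<^sub>R real N)))
            in bdd_above (Cr_values r (ball 0 1) g) \<and> Cr_norm r (ball 0 1) g < \<delta>)"
      by (rule exI[of _ "\<psi> e"], rule conjI[OF eig[OF e(2)] est[OF e0]])
  qed
qed

end
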